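(* Let $p$ be a prime, $m\geq 1$ an integer, $E=\bigcup_{i=0}^{m-1}p^i\mathbb{Z}_p^\times$ identified with $\mathbb{Q}_p^\ast/p^{m\mathbb{Z}}$, and let $D$ be the operator on functions on $E$ given by $$D\phi(x)=-c_p\int_E H(z,x)\big(\phi(z)-\phi(x)\big)\,d^\ast z,\qquad c_p=\frac{p(1-p^{-1})^2}{1-p^{-2}},$$ $$H(z,x)=\frac{|x|\,|z|}{|x-z|^2}+\frac{1}{p^m-1}\Big(\frac{|x|}{|z|}+\frac{|z|}{|x|}\Big).$$ Every continuous multiplicative character $\pi$ of $\mathbb{Q}_p^\ast/p^{m\mathbb{Z}}$ is an eigenfunction of $D$. Writing $\pi(p^k u)=\zeta(k)\hat\pi(u)$ for $k\in\mathbb{Z}/m\mathbb{Z}$, $u\in\mathbb{Z}_p^\times$, with $\zeta$ a character of $\mathbb{Z}/m\mathbb{Z}$ and $\hat\pi$ a continuous character of $\mathbb{Z}_p^\times$, the eigenvalue is: (i) if $\hat\pi$ is nontrivial with conductor $n\geq 1$: $\lambda=(p-1)p^{n-1}$ (independent of $\zeta$ and of $m$); (ii) if $\hat\pi$ is trivial and $\zeta(1)=\omega$ (an $m$-th root of unity): $\lambda=\dfrac{p(p-1)(2-\omega-\overline{\omega})}{p^2-p(\omega+\overline{\omega})+1}$.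
   Context: $|x|=p^{-v(x)}$ with $v$ the $p$-adic valuation; $dx$ is the additive Haar measure with $\mathbb{Z}_p$ of measure $1$ and $d^\ast x=dx/|x|$. Products of elements of $E$ are taken modulo $p^{m\mathbb{Z}}$ with representative in $E$. The conductor of a nontrivial character $\hat\pi$ of $\mathbb{Z}_p^\times$ is the smallest integer $n\geq 1$ such that $\hat\pi$ is trivial on $1+p^n\mathbb{Z}_p$. *)

theory Defs
  imports "HOL-Probability.Probability"
begin

text \<open>p-adic integers Z_p are modelled by their p-adic digit sequences
  u = (u 0, u 1, ...), u i < p, standing for sum of u i * p^i.\<close>

definition Zp :: "nat \<Rightarrow> (nat \<Rightarrow> nat) set" where
  "Zp p = {u. \<forall>i. u i < p}"

definition Zp_units :: "nat \<Rightarrow> (nat \<Rightarrow> nat) set" where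
  "Zp_units p = {u \<in> Zp p. u 0 \<noteq> 0}"

definition zp_res :: "nat \<Rightarrow> (nat \<Rightarrow> nat) \<Rightarrow> nat \<Rightarrow> nat" where
  "zp_res p u n = (\<Sum>i<n. u i * p ^ i)"

text \<open>Multiplication in Z_p (digit i of the product is read off the product mod p^(i+1)).\<close>
definition zp_mult :: "nat \<Rightarrow> (nat \<Rightarrow> nat) \<Rightarrow> (nat \<Rightarrow> nat) \<Rightarrow> (nat \<Rightarrow> nat)" where
  "zp_mult p u w = (\<lambda>i. ((zp_res p u (Suc i) * zp_res p w (Suc i)) mod p ^ Suc i) div p ^ i)"

text \<open>p-adic absolute value |u - w| of a difference in Z_p: p^(-v(u-w)), where
  v(u-w) is the first index at which the digits differ.\<close>
definition zp_abs_diff :: "nat \<Rightarrow> (nat \<Rightarrow> nat) \<Rightarrow> (nat \<Rightarrow> nat) \<Rightarrow> real" where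
  "zp_abs_diff p u w = (if u = w then 0 else 1 / real p ^ (LEAST i. u i \<noteq> w i))"

text \<open>Normalised additive Haar measure on Z_p (Z_p has measure 1): product of
  uniform measures on the digits.\<close>
definition zp_haar :: "nat \<Rightarrow> (nat \<Rightarrow> nat) measure" where
  "zp_haar p = (\<Pi>\<^sub>M i\<in>(UNIV::nat set). uniform_count_measure {..<p})"

text \<open>E = union over i<m of p^i Z_p^x; the element p^k u is represented by (k, u).\<close>
definition Eset :: "nat \<Rightarrow> nat \<Rightarrow> (nat \<times> (nat \<Rightarrow> nat)) set" where
  "Eset p m = {(k, u). k < m \<and> u \<in> Zp_units p}"

definition E_abs :: "nat \<Rightarrow> nat \<times> (nat \<Rightarrow> nat) \<Rightarrow> real" where
  "E_abs p x = 1 / real p ^ fst x"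

text \<open>|x - z| for x = p^k u, z = p^j w (computed in Q_p with these representatives).\<close>
definition E_abs_diff :: "nat \<Rightarrow> nat \<times> (nat \<Rightarrow> nat) \<Rightarrow> nat \<times> (nat \<Rightarrow> nat) \<Rightarrow> real" where
  "E_abs_diff p x z =
     (if fst x \<noteq> fst z then 1 / real p ^ min (fst x) (fst z)
      else (1 / real p ^ fst x) * zp_abs_diff p (snd x) (snd z))"

definition c_p :: "nat \<Rightarrow> real" where
  "c_p p = real p * (1 - 1 / real p)\<^sup>2 / (1 - 1 / (real p)\<^sup>2)"

definition kernelH :: "nat \<Rightarrow> nat \<Rightarrow> nat \<times> (nat \<Rightarrow> nat) \<Rightarrow> nat \<times> (nat \<Rightarrow> nat) \<Rightarrow> real" where
  "kernelH p m z x =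
     E_abs p x * E_abs p z / (E_abs_diff p x z)\<^sup>2
     + 1 / (real p ^ m - 1) * (E_abs p x / E_abs p z + E_abs p z / E_abs p x)"

text \<open>The multiplicative measure d*z = dz/|z| on p^k Z_p^x is the
  image of the Haar measure dw restricted to Z_p^x under w \<mapsto> p^k w
  (since d(p^k w) = p^(-k) dw and |p^k w| = p^(-k)); hence the integral over E
  is a sum over k < m of integrals over Z_p^x.\<close>
definition Dop :: "nat \<Rightarrow> nat \<Rightarrow> (nat \<times> (nat \<Rightarrow> nat) \<Rightarrow> complex) \<Rightarrow> nat \<times> (nat \<Rightarrow> nat) \<Rightarrow> complex" where
  "Dop p m \<phi> x =
     - complex_of_real (c_p p) *
       (\<Sum>k<m. \<integral>w. indicator (Zp_units p) w *
            (complex_of_real (kernelH p m (k, w) x) * (\<phi> (k, w) - \<phi> x)) \<partial>zp_haar p)"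

definition zp_character :: "nat \<Rightarrow> ((nat \<Rightarrow> nat) \<Rightarrow> complex) \<Rightarrow> bool" where
  "zp_character p chi \<longleftrightarrow>
     (\<forall>u\<in>Zp_units p. chi u \<noteq> 0) \<and>
     (\<forall>u\<in>Zp_units p. \<forall>w\<in>Zp_units p. chi (zp_mult p u w) = chi u * chi w)"

text \<open>Continuity on Z_p^x for the p-adic topology (balls are u + p^N Z_p).\<close>
definition zp_continuous :: "nat \<Rightarrow> ((nat \<Rightarrow> nat) \<Rightarrow> complex) \<Rightarrow> bool" where
  "zp_continuous p chi \<longleftrightarrow>
     (\<forall>u\<in>Zp_units p. \<forall>e>0. \<exists>N. \<forall>w\<in>Zp_units p.
        zp_res p w N = zp_res p u N \<longrightarrow> cmod (chi w - chi u) < e)"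

definition zp_trivial :: "nat \<Rightarrow> ((nat \<Rightarrow> nat) \<Rightarrow> complex) \<Rightarrow> bool" where
  "zp_trivial p chi \<longleftrightarrow> (\<forall>u\<in>Zp_units p. chi u = 1)"

definition conductor :: "nat \<Rightarrow> ((nat \<Rightarrow> nat) \<Rightarrow> complex) \<Rightarrow> nat" where
  "conductor p chi = (LEAST n. n \<ge> 1 \<and>
     (\<forall>u\<in>Zp_units p. zp_res p u n = 1 \<longrightarrow> chi u = 1))"

end

theory Submission
  imports Defs "HOL-Number_Theory.Number_Theory"
begin


definition dig :: "nat \<Rightarrow> nat \<Rightarrow> nat \<Rightarrow> nat" where
  "dig p r = (\<lambda>i. r div p ^ i mod p)"

lemma zp_res_Suc: "zp_res p u (Suc n) = zp_res p u n + u n * p ^ n"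
  by (simp add: zp_res_def)

lemma zp_res_0[simp]: "zp_res p u 0 = 0"
  by (simp add: zp_res_def)

lemma zp_res_lt: assumes "u \<in> Zp p" shows "zp_res p u n < p ^ n"
proof (induction n)
  case 0 then show ?case by simp
next
  case (Suc n)
  have "u n < p" using assms by (simp add: Zp_def)
  then have "u n * p ^ n \<le> (p - 1) * p ^ n" by simp
  then have "zp_res p u (Suc n) < p ^ n + (p - 1) * p ^ n"
    using Suc by (simp add: zp_res_Suc add_less_le_mono)
  also have "\<dots> = p ^ Suc n" using \<open>u n < p\<close>
    by (cases p) (auto simp: algebra_simps)
  finally show ?case .
qed

lemma zp_res_mod: assumes "u \<in> Zp p" "i \<le> n" shows "zp_res p u n mod p ^ i = zp_res p u i"
  using assms(2)
proof (induction n)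
  case 0 then show ?case by simp
next
  case (Suc n)
  show ?case
  proof (cases "i = Suc n")
    case True then show ?thesis by (metis mod_less zp_res_lt assms(1))
  next
    case False
    then have "i \<le> n" using Suc by simp
    have "p ^ i dvd u n * p ^ n" using \<open>i \<le> n\<close> by (simp add: le_imp_power_dvd)
    then have "zp_res p u (Suc n) mod p ^ i = zp_res p u n mod p ^ i"
      by (metis add.right_neutral dvd_imp_mod_0 mod_add_right_eq zp_res_Suc)
    then show ?thesis using Suc.IH[OF \<open>i \<le> n\<close>] by simp
  qed
qed

lemma zp_res_digit: assumes "u \<in> Zp p" "i < n" shows "zp_res p u n div p ^ i mod p = u i"
proof -
  have "zp_res p u n mod p ^ Suc i = zp_res p u i + u i * p ^ i"
    using zp_res_mod[OF assms(1), of "Suc i" n] assms(2) by (simp add: zp_res_Suc)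
  moreover have "zp_res p u n mod p ^ Suc i = p ^ i * (zp_res p u n div p ^ i mod p) + zp_res p u n mod p ^ i"
    by (metis mod_mult2_eq power_Suc2)
  moreover have "zp_res p u n mod p ^ i = zp_res p u i"
    using zp_res_mod[OF assms(1), of i n] assms(2) by simp
  moreover have "p > 0" using assms(1) by (auto simp: Zp_def)
  ultimately show ?thesis by (simp add: mult.commute)
qed

lemma dig_Zp: "p > 0 \<Longrightarrow> dig p r \<in> Zp p"
  by (simp add: dig_def Zp_def)

lemma zp_res_dig: "zp_res p (dig p r) n = r mod p ^ n"
proof (induction n)
  case 0 then show ?case by simp
next
  case (Suc n)
  have "r mod p ^ Suc n = p ^ n * (r div p ^ n mod p) + r mod p ^ n"
    by (metis mod_mult2_eq power_Suc2)
  then show ?case using Suc by (simp add: zp_res_Suc dig_def)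
qed

lemma zp_res_cong_digits: "(\<forall>i<n. u i = w i) \<Longrightarrow> zp_res p u n = zp_res p w n"
  by (simp add: zp_res_def)

lemma zp_res_eq_iff: assumes "u \<in> Zp p" "w \<in> Zp p"
  shows "zp_res p u n = zp_res p w n \<longleftrightarrow> (\<forall>i<n. u i = w i)"
  using zp_res_digit[OF assms(1)] zp_res_digit[OF assms(2)] zp_res_cong_digits by metis

lemma zp_eqI: assumes "u \<in> Zp p" "w \<in> Zp p" "\<And>n. zp_res p u n = zp_res p w n" shows "u = w"
proof
  fix i show "u i = w i" using zp_res_eq_iff[OF assms(1,2), of "Suc i"] assms(3) by auto
qed

lemma zp_res_1: "zp_res p u 1 = u 0" by (simp add: zp_res_def)

lemma zp_res_mod_p: assumes "u \<in> Zp p" "n \<ge> 1" shows "zp_res p u n mod p = u 0"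
  using zp_res_mod[OF assms(1), of 1 n] assms by (simp add: zp_res_def)

lemma zp_mult_Zp: "p > 0 \<Longrightarrow> zp_mult p u w \<in> Zp p"
proof -
  assume "p > 0"
  have "(x mod p ^ Suc i) div p ^ i < p" for x i
    by (metis \<open>p > 0\<close> div_mult2_eq' mod_less_divisor mod_mult2_eq' power_Suc2
        bits_mod_div_trivial less_mult_imp_div_less mult.commute pos_mod_bound  zero_less_power
        mod_less_divisor)
  then show ?thesis by (simp add: zp_mult_def Zp_def)
qed


lemma zp_res_mult: assumes "p > 0" "u \<in> Zp p" "w \<in> Zp p"
  shows "zp_res p (zp_mult p u w) n = (zp_res p u n * zp_res p w n) mod p ^ n"
proof (induction n)
  case 0 then show ?case by simp
next
  case (Suc n)
  define X where "X = zp_res p u (Suc n) * zp_res p w (Suc n)"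
  have "(zp_res p u n * zp_res p w n) mod p ^ n = X mod p ^ n"
    unfolding X_def using zp_res_mod[OF assms(2), of n "Suc n"] zp_res_mod[OF assms(3), of n "Suc n"]
    by (metis le_SucI mod_mult_eq order_refl)
  moreover have "zp_mult p u w n = X mod p ^ Suc n div p ^ n"
    by (simp add: zp_mult_def X_def)
  moreover have "X mod p ^ Suc n mod p ^ n = X mod p ^ n"
    by (simp add: mod_mod_cancel le_imp_power_dvd)
  ultimately have "zp_res p (zp_mult p u w) (Suc n) = X mod p ^ n + (X mod p ^ Suc n div p ^ n) * p ^ n"
    using Suc by (simp add: zp_res_Suc)
  also have "\<dots> = X mod p ^ Suc n"
    by (metis \<open>X mod p ^ Suc n mod p ^ n = X mod p ^ n\<close> add.commute div_mult_mod_eq)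
  finally show ?case by (simp add: X_def)
qed

lemma prime_gt0: "prime (p::nat) \<Longrightarrow> p > 0" using prime_gt_0_nat by blast

lemma units_Zp: "u \<in> Zp_units p \<Longrightarrow> u \<in> Zp p" by (simp add: Zp_units_def)

lemma zp_mult_unit: assumes "prime p" "u \<in> Zp_units p" "w \<in> Zp_units p"
  shows "zp_mult p u w \<in> Zp_units p"
proof -
  have p0: "p > 0" using assms(1) prime_gt0 by blast
  have "zp_res p (zp_mult p u w) 1 = (u 0 * w 0) mod p"
    using zp_res_mult[OF p0 units_Zp[OF assms(2)] units_Zp[OF assms(3)], of 1]
    by (simp add: zp_res_def)
  moreover have "\<not> p dvd u 0" "\<not> p dvd w 0" using assms(2,3)
    by (auto simp: Zp_units_def Zp_def nat_dvd_not_less)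
  then have "\<not> p dvd u 0 * w 0" using assms(1) by (simp add: prime_dvd_mult_iff)
  ultimately have "zp_mult p u w 0 \<noteq> 0" by (simp add: zp_res_def dvd_eq_mod_eq_0)
  then show ?thesis using zp_mult_Zp[OF p0] by (simp add: Zp_units_def)
qed

lemma unit_coprime: assumes "prime p" "u \<in> Zp_units p"
  shows "coprime (zp_res p u n) (p ^ n)"
proof (cases "n = 0")
  case True then show ?thesis by simp
next
  case False
  have "zp_res p u n mod p = u 0" using zp_res_mod_p[OF units_Zp[OF assms(2)]] False by simp
  then have "\<not> p dvd zp_res p u n" using assms(2) by (simp add: Zp_units_def dvd_eq_mod_eq_0)
  then have "coprime p (zp_res p u n)" using assms(1) by (simp add: prime_imp_coprime)
  then show ?thesis by (simp add: coprime_commute)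
qed

definition inv_res :: "nat \<Rightarrow> (nat \<Rightarrow> nat) \<Rightarrow> nat \<Rightarrow> nat" where
  "inv_res p u n = (SOME x. x < p ^ n \<and> [zp_res p u n * x = 1] (mod p ^ n))"

lemma inv_res: assumes "prime p" "u \<in> Zp_units p"
  shows "inv_res p u n < p ^ n \<and> [zp_res p u n * inv_res p u n = 1] (mod p ^ n)"
proof -
  have p0: "p > 0" using assms(1) prime_gt0 by blast
  obtain x where x: "[zp_res p u n * x = 1] (mod p ^ n)"
    using cong_solve_coprime_nat[OF unit_coprime[OF assms, of n]] by auto
  have "x mod p ^ n < p ^ n" using p0 by simp
  moreover have "[zp_res p u n * (x mod p ^ n) = 1] (mod p ^ n)"
    using x by (metis cong_def mod_mult_right_eq)
  ultimately have "\<exists>y. y < p ^ n \<and> [zp_res p u n * y = 1] (mod p ^ n)" by blast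
  then show ?thesis unfolding inv_res_def by (rule someI_ex)
qed

lemma inv_res_unique: assumes "prime p" "u \<in> Zp_units p" "y < p ^ n" "[zp_res p u n * y = 1] (mod p ^ n)"
  shows "y = inv_res p u n"
proof -
  have "[zp_res p u n * y = zp_res p u n * inv_res p u n] (mod p ^ n)"
    using inv_res[OF assms(1,2), of n] assms(4) by (meson cong_sym cong_trans)
  then have "[y = inv_res p u n] (mod p ^ n)"
    using cong_mult_lcancel_nat[OF unit_coprime[OF assms(1,2)]] by blast
  then show ?thesis using inv_res[OF assms(1,2), of n] assms(3) by (simp add: cong_def)
qed

lemma inv_res_mod: assumes "prime p" "u \<in> Zp_units p"
  shows "inv_res p u (Suc n) mod p ^ n = inv_res p u n"
proof -
  have p0: "p > 0" using assms(1) prime_gt0 by blast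
  have A: "[zp_res p u (Suc n) * inv_res p u (Suc n) = 1] (mod p ^ n)"
    by (rule cong_dvd_modulus_nat[OF conjunct2[OF inv_res[OF assms, of "Suc n"]]]) (simp add: le_imp_power_dvd)
  have B: "[zp_res p u n = zp_res p u (Suc n)] (mod p ^ n)"
    unfolding cong_def using zp_res_mod[OF units_Zp[OF assms(2)], of n "Suc n"] zp_res_lt[OF units_Zp[OF assms(2)], of n]
    by simp
  have B2: "[inv_res p u (Suc n) mod p ^ n = inv_res p u (Suc n)] (mod p ^ n)"
    unfolding cong_def by simp
  have "[zp_res p u n * (inv_res p u (Suc n) mod p ^ n) = zp_res p u (Suc n) * inv_res p u (Suc n)] (mod p ^ n)"
    using B B2 by (rule cong_mult)
  then have C: "[zp_res p u n * (inv_res p u (Suc n) mod p ^ n) = 1] (mod p ^ n)"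
    using A by (rule cong_trans)
  have "inv_res p u (Suc n) mod p ^ n < p ^ n" using p0 by simp
  from inv_res_unique[OF assms this C] show ?thesis .
qed

definition zp_inv :: "nat \<Rightarrow> (nat \<Rightarrow> nat) \<Rightarrow> (nat \<Rightarrow> nat)" where
  "zp_inv p u = (\<lambda>i. inv_res p u (Suc i) div p ^ i)"

lemma zp_inv_res: assumes "prime p" "u \<in> Zp_units p"
  shows "zp_res p (zp_inv p u) n = inv_res p u n"
proof (induction n)
  case 0 then show ?case using inv_res[OF assms, of 0] by simp
next
  case (Suc n)
  have "zp_res p (zp_inv p u) (Suc n) = inv_res p u (Suc n) mod p ^ n + inv_res p u (Suc n) div p ^ n * p ^ n"
    using Suc inv_res_mod[OF assms, of n] by (simp add: zp_res_Suc zp_inv_def)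
  then show ?case by (metis mod_div_mult_eq)
qed

lemma zp_inv_Zp: assumes "prime p" "u \<in> Zp_units p" shows "zp_inv p u \<in> Zp p"
proof -
  have p0: "p > 0" using assms(1) prime_gt0 by blast
  have "inv_res p u (Suc i) div p ^ i < p" for i
    using inv_res[OF assms, of "Suc i"] p0 by (simp add: less_mult_imp_div_less mult.commute)
  then show ?thesis by (simp add: Zp_def zp_inv_def)
qed

lemma mod_one_cong: "[a * b = 1] (mod m) \<Longrightarrow> (a * (b * c mod m)) mod m = c mod m" for a b c m :: nat
proof -
  assume h: "[a * b = 1] (mod m)"
  have "(a * (b * c mod m)) mod m = (a * b * c) mod m" by (simp add: mod_mult_right_eq mult.assoc)
  also have "\<dots> = ((a * b mod m) * c) mod m" by (simp add: mod_mult_left_eq)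
  also have "\<dots> = ((1 mod m) * c) mod m" using h by (simp add: cong_def)
  also have "\<dots> = c mod m" by (simp add: mod_mult_left_eq)
  finally show ?thesis .
qed

lemma zp_local_const_aux: assumes "prime p" "u \<in> Zp_units p" "w \<in> Zp_units p"
  shows "zp_mult p u (zp_mult p (zp_inv p u) w) = w"
proof -
  have p0: "p > 0" using assms(1) prime_gt0 by blast
  note Zu = units_Zp[OF assms(2)] and Zw = units_Zp[OF assms(3)] and Zi = zp_inv_Zp[OF assms(1,2)]
  show ?thesis
  proof (rule zp_eqI[OF zp_mult_Zp[OF p0] Zw])
    fix n
    have 1: "zp_res p (zp_mult p (zp_inv p u) w) n = (inv_res p u n * zp_res p w n) mod p ^ n"
      using zp_res_mult[OF p0 Zi Zw, of n] zp_inv_res[OF assms(1,2), of n] by simp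
    have "zp_res p (zp_mult p u (zp_mult p (zp_inv p u) w)) n
       = (zp_res p u n * ((inv_res p u n * zp_res p w n) mod p ^ n)) mod p ^ n"
      using zp_res_mult[OF p0 Zu zp_mult_Zp[OF p0, of "zp_inv p u" w], of n] 1 by simp
    also have "\<dots> = zp_res p w n mod p ^ n"
      by (rule mod_one_cong) (use inv_res[OF assms(1,2), of n] in blast)
    also have "\<dots> = zp_res p w n" using zp_res_lt[OF Zw, of n] by simp
    finally show "zp_res p (zp_mult p u (zp_mult p (zp_inv p u) w)) n = zp_res p w n" .
  qed
qed


lemma prime_ge2: "prime (p::nat) \<Longrightarrow> p \<ge> 2" using prime_ge_2_nat by blast

definition one_zp :: "nat \<Rightarrow> nat \<Rightarrow> nat" where "one_zp p = dig p 1"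

lemma one_zp_res: "zp_res p (one_zp p) n = 1 mod p ^ n"
  by (simp add: one_zp_def zp_res_dig)

lemma one_zp_unit: assumes "prime p" shows "one_zp p \<in> Zp_units p"
proof -
  have "p \<ge> 2" using prime_ge2[OF assms] .
  then show ?thesis using dig_Zp[of p 1] by (simp add: Zp_units_def one_zp_def dig_def)
qed

lemma zp_inv_unit: assumes "prime p" "u \<in> Zp_units p" shows "zp_inv p u \<in> Zp_units p"
proof -
  have p2: "p \<ge> 2" using prime_ge2[OF assms(1)] .
  have "[zp_res p u 1 * inv_res p u 1 = 1] (mod p)" using inv_res[OF assms, of 1] by simp
  then have "(zp_res p u 1 * inv_res p u 1) mod p = 1" using p2 by (simp add: cong_def)
  then have "inv_res p u 1 \<noteq> 0" by (metis mod_0 mult_0_right zero_neq_one)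
  moreover have "zp_inv p u 0 = inv_res p u 1" by (simp add: zp_inv_def)
  ultimately show ?thesis using zp_inv_Zp[OF assms] by (simp add: Zp_units_def)
qed

lemma doubling: fixes z :: complex assumes "\<And>k. cmod (z ^ (2 ^ k) - 1) < 1/2" shows "z = 1"
proof (rule ccontr)
  assume "z \<noteq> 1"
  then have d: "cmod (z - 1) > 0" by simp
  have grow: "cmod (z ^ (2 ^ k) - 1) \<ge> (3/2) ^ k * cmod (z - 1)" for k
  proof (induction k)
    case 0 then show ?case by simp
  next
    case (Suc k)
    let ?y = "z ^ (2 ^ k)"
    have "z ^ (2 ^ Suc k) - 1 = (?y - 1) * (?y + 1)"
      by (simp add: power_mult power2_eq_square algebra_simps)
    moreover have "cmod (?y + 1) \<ge> 3/2"
    proof -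
      have "cmod ((?y + 1) - (?y - 1)) \<le> cmod (?y + 1) + cmod (?y - 1)"
        by (rule norm_triangle_ineq4)
      then have "cmod (?y + 1) \<ge> cmod (2::complex) - cmod (?y - 1)" by simp
      then show ?thesis using assms[of k] by simp
    qed
    ultimately have "cmod (z ^ (2 ^ Suc k) - 1) \<ge> cmod (?y - 1) * (3/2)"
      by (metis mult_left_mono norm_ge_zero norm_mult)
    moreover have "cmod (?y - 1) * (3/2) \<ge> (3/2) ^ k * cmod (z - 1) * (3/2)"
      using Suc by (simp add: mult.commute)
    ultimately show ?case by (simp add: algebra_simps)
  qed
  obtain k where "(1/2) / cmod (z - 1) < (3/2) ^ k"
    using real_arch_pow[of "3/2" "(1/2) / cmod (z - 1)"] by auto
  then have "1/2 < (3/2) ^ k * cmod (z - 1)" using d by (simp add: field_simps)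
  then show False using grow[of k] assms[of k] by simp
qed

lemma chi_one: assumes "prime p" "zp_character p chi" shows "chi (one_zp p) = 1"
proof -
  have p0: "p > 0" using prime_gt0[OF assms(1)] .
  have U: "one_zp p \<in> Zp_units p" using one_zp_unit[OF assms(1)] .
  have "zp_mult p (one_zp p) (one_zp p) = one_zp p"
  proof (rule zp_eqI[OF zp_mult_Zp[OF p0] units_Zp[OF U]])
    fix n show "zp_res p (zp_mult p (one_zp p) (one_zp p)) n = zp_res p (one_zp p) n"
      using zp_res_mult[OF p0 units_Zp[OF U] units_Zp[OF U], of n]
      by (simp add: one_zp_res mod_mult_left_eq mod_mult_right_eq)
  qed
  then have "chi (one_zp p) = chi (one_zp p) * chi (one_zp p)"
    using assms(2) U unfolding zp_character_def by metis
  moreover have "chi (one_zp p) \<noteq> 0" using assms(2) U unfolding zp_character_def by blast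
  ultimately show ?thesis by simp
qed

lemma chi_local_const:
  assumes "prime p" "zp_character p chi" "zp_continuous p chi"
  shows "\<exists>N\<ge>1. \<forall>N'\<ge>N. \<forall>u\<in>Zp_units p. \<forall>w\<in>Zp_units p.
            zp_res p u N' = zp_res p w N' \<longrightarrow> chi u = chi w"
proof -
  have p0: "p > 0" using prime_gt0[OF assms(1)] .
  have p2: "p \<ge> 2" using prime_ge2[OF assms(1)] .
  have U1: "one_zp p \<in> Zp_units p" using one_zp_unit[OF assms(1)] .
  have mult: "\<And>u w. u \<in> Zp_units p \<Longrightarrow> w \<in> Zp_units p \<Longrightarrow> chi (zp_mult p u w) = chi u * chi w"
    using assms(2) unfolding zp_character_def by blast
  obtain N0 where N0: "\<forall>w\<in>Zp_units p. zp_res p w N0 = zp_res p (one_zp p) N0 \<longrightarrow>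
        cmod (chi w - chi (one_zp p)) < 1/2"
    using assms(3) U1 unfolding zp_continuous_def by (meson half_gt_zero zero_less_one)
  define N where "N = Suc N0"
  have pN: "p ^ N > 1" using p2 unfolding N_def by (intro one_less_power) auto
  define K where "K = {w \<in> Zp_units p. zp_res p w N = 1}"
  have Kclosed: "zp_mult p w w \<in> K" if "w \<in> K" for w
  proof -
    have "zp_res p (zp_mult p w w) N = 1"
      using that zp_res_mult[OF p0 units_Zp units_Zp, of w w N] pN p2 by (simp add: K_def N_def)
    then show ?thesis using zp_mult_unit[OF assms(1)] that by (simp add: K_def)
  qed
  have Kclose: "cmod (chi w - 1) < 1/2" if "w \<in> K" for w
  proof -
    have "zp_res p w N0 = zp_res p w N mod p ^ N0"
      using zp_res_mod[OF units_Zp, of w p N0 N] that by (simp add: K_def N_def)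
    then have "zp_res p w N0 = zp_res p (one_zp p) N0" using that by (simp add: K_def one_zp_res)
    then show ?thesis using N0 that chi_one[OF assms(1,2)] by (simp add: K_def)
  qed
  have Ktriv: "chi w = 1" if "w \<in> K" for w
  proof (rule doubling)
    fix k
    have "((\<lambda>v. zp_mult p v v) ^^ k) w \<in> K \<and> chi (((\<lambda>v. zp_mult p v v) ^^ k) w) = chi w ^ (2 ^ k)"
    proof (induction k)
      case 0 then show ?case using that by simp
    next
      case (Suc k)
      let ?v = "((\<lambda>v. zp_mult p v v) ^^ k) w"
      have "?v \<in> Zp_units p" using Suc by (simp add: K_def)
      then have "chi (zp_mult p ?v ?v) = chi ?v * chi ?v" using mult by blast
      moreover have "chi w ^ 2 ^ Suc k = (chi w ^ 2 ^ k) * (chi w ^ 2 ^ k)"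
        by (metis power_Suc2 power_mult power2_eq_square)
      ultimately show ?case using Suc Kclosed by simp
    qed
    then show "cmod (chi w ^ 2 ^ k - 1) < 1/2" using Kclose by metis
  qed
  have LC: "chi u = chi w" if "u \<in> Zp_units p" "w \<in> Zp_units p" "zp_res p u N = zp_res p w N" for u w
  proof -
    define q where "q = zp_mult p (zp_inv p u) w"
    have qU: "q \<in> Zp_units p" unfolding q_def using zp_mult_unit[OF assms(1) zp_inv_unit[OF assms(1) that(1)] that(2)] .
    have "zp_res p q N = (inv_res p u N * zp_res p u N) mod p ^ N"
      unfolding q_def using zp_res_mult[OF p0 zp_inv_Zp[OF assms(1) that(1)] units_Zp[OF that(2)], of N]
        zp_inv_res[OF assms(1) that(1), of N] that(3) by simp
    also have "\<dots> = 1" using inv_res[OF assms(1) that(1), of N] pN p2 by (simp add: cong_def mult.commute N_def)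
    finally have "q \<in> K" using qU by (simp add: K_def)
    have "w = zp_mult p u q" unfolding q_def using zp_local_const_aux[OF assms(1) that(1,2)] by simp
    then have "chi w = chi u * chi q" using mult[OF that(1) qU] by simp
    then show ?thesis using Ktriv[OF \<open>q \<in> K\<close>] by simp
  qed
  show ?thesis
  proof (intro exI[of _ N] conjI allI impI ballI)
    show "1 \<le> N" by (simp add: N_def)
    fix N' u w assume "N \<le> N'" "u \<in> Zp_units p" "w \<in> Zp_units p" "zp_res p u N' = zp_res p w N'"
    then have "zp_res p u N = zp_res p w N"
      using zp_res_mod[OF units_Zp, of u p N N'] zp_res_mod[OF units_Zp, of w p N N'] by metis
    then show "chi u = chi w" using LC \<open>u \<in> _\<close> \<open>w \<in> _\<close> by blast
  qed
qed


lemma space_zp_haar: "space (zp_haar p) = Zp p"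
  by (auto simp: zp_haar_def space_PiM space_uniform_count_measure Zp_def PiE_def extensional_def)

definition cyl :: "nat \<Rightarrow> nat \<Rightarrow> nat \<Rightarrow> (nat \<Rightarrow> nat) set" where
  "cyl p N r = {w \<in> Zp p. zp_res p w N = r}"

lemma cyl_emb: assumes "p > 0" "r < p ^ N"
  shows "cyl p N r = prod_emb UNIV (\<lambda>_. uniform_count_measure {..<p}) {..<N} (\<Pi>\<^sub>E i\<in>{..<N}. {dig p r i})"
proof -
  have "prod_emb UNIV (\<lambda>_. uniform_count_measure {..<p}) {..<N} (\<Pi>\<^sub>E i\<in>{..<N}. {dig p r i})
     = (\<Pi>\<^sub>E i\<in>UNIV. if i \<in> {..<N} then {dig p r i} else {..<p})"
  proof -
    have "\<And>i. i \<in> {..<N} \<Longrightarrow> {dig p r i} \<subseteq> space (uniform_count_measure {..<p})"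
      using assms(1) by (auto simp: space_uniform_count_measure dig_def)
    from prod_emb_PiE[where J="{..<N}" and I=UNIV and M="\<lambda>_. uniform_count_measure {..<p}" and E="\<lambda>i. {dig p r i}", OF _ this] show ?thesis by (simp add: space_uniform_count_measure cong: if_cong)
  qed
  also have "\<dots> = cyl p N r"
  proof -
    have "w \<in> (\<Pi>\<^sub>E i\<in>UNIV. if i \<in> {..<N} then {dig p r i} else {..<p}) \<longleftrightarrow> w \<in> cyl p N r" for w
    proof -
      have dZ: "dig p r \<in> Zp p" using dig_Zp[OF assms(1)] .
      have "w \<in> (\<Pi>\<^sub>E i\<in>UNIV. if i \<in> {..<N} then {dig p r i} else {..<p}) \<longleftrightarrow>
            (\<forall>i. (i < N \<longrightarrow> w i = dig p r i) \<and> (\<not> i < N \<longrightarrow> w i < p))"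
        by (auto simp: PiE_iff)
      also have "\<dots> \<longleftrightarrow> w \<in> Zp p \<and> (\<forall>i<N. w i = dig p r i)"
        using dZ by (auto simp: Zp_def)
      also have "\<dots> \<longleftrightarrow> w \<in> cyl p N r"
        using zp_res_eq_iff[OF _ dZ, of w N] zp_res_dig[of p r N] assms(2)
        by (auto simp: cyl_def)
      finally show ?thesis .
    qed
    then show ?thesis by blast
  qed
  finally show ?thesis by simp
qed

lemma cyl_sets: assumes "p > 0" "r < p ^ N" shows "cyl p N r \<in> sets (zp_haar p)"
  unfolding cyl_emb[OF assms] zp_haar_def
  by (rule sets_PiM_I) (auto simp: sets_uniform_count_measure dig_def assms(1))

lemma cyl_emeasure: assumes "p > 0" "r < p ^ N" shows "emeasure (zp_haar p) (cyl p N r) = ennreal (1 / real p ^ N)"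
proof -
  have "emeasure (zp_haar p) (cyl p N r) = (\<Prod>i\<in>{..<N}. emeasure (uniform_count_measure {..<p}) {dig p r i})"
    unfolding cyl_emb[OF assms] zp_haar_def
    using assms(1) by (intro emeasure_PiM_emb) (auto intro!: prob_space_uniform_count_measure simp: lessThan_empty_iff sets_uniform_count_measure dig_def)
  also have "\<dots> = (\<Prod>i\<in>{..<N}. ennreal (1 / real p))"
    using assms(1) by (intro prod.cong refl) (simp add: emeasure_uniform_count_measure dig_def ennreal_of_nat_eq_real_of_nat divide_ennreal)
  also have "\<dots> = ennreal (1 / real p ^ N)"
    by (simp add: ennreal_power power_one_over)
  finally show ?thesis .
qed

lemma cyl_measure: assumes "p > 0" "r < p ^ N" shows "measure (zp_haar p) (cyl p N r) = 1 / real p ^ N"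
  using cyl_emeasure[OF assms] by (simp add: measure_def)

lemma avg_integral: fixes F :: "nat \<Rightarrow> complex"
  assumes "p > 0"
  shows "(\<integral>w. F (zp_res p w N) \<partial>zp_haar p) = (\<Sum>r<p ^ N. F r) / of_nat (p ^ N)"
proof -
  have fin: "emeasure (zp_haar p) (cyl p N r) < \<infinity>" if "r < p ^ N" for r
    using cyl_emeasure[OF assms that] by simp
  have "(\<integral>w. F (zp_res p w N) \<partial>zp_haar p) = (\<integral>w. (\<Sum>r<p ^ N. complex_of_real (indicator (cyl p N r) w) * F r) \<partial>zp_haar p)"
  proof (rule Bochner_Integration.integral_cong[OF refl])
    fix w assume "w \<in> space (zp_haar p)"
    then have wZ: "w \<in> Zp p" by (simp add: space_zp_haar)
    have "(\<Sum>r<p ^ N. complex_of_real (indicator (cyl p N r) w) * F r)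
        = (\<Sum>r\<in>{zp_res p w N}. complex_of_real (indicator (cyl p N r) w) * F r)"
      using zp_res_lt[OF wZ, of N] by (intro sum.mono_neutral_right) (auto simp: cyl_def)
    also have "\<dots> = F (zp_res p w N)" using wZ by (simp add: cyl_def)
    finally show "F (zp_res p w N) = (\<Sum>r<p ^ N. complex_of_real (indicator (cyl p N r) w) * F r)" by simp
  qed
  also have "\<dots> = (\<Sum>r<p ^ N. (\<integral>w. complex_of_real (indicator (cyl p N r) w) * F r \<partial>zp_haar p))"
    by (rule Bochner_Integration.integral_sum) (auto intro!: integrable_mult_left integrable_of_real cyl_sets[OF assms] fin)
  also have "\<dots> = (\<Sum>r<p ^ N. complex_of_real (1 / real p ^ N) * F r)"
    using cyl_measure[OF assms] cyl_sets[OF assms] by (intro sum.cong refl) (simp add: Int_absorb2 sets.sets_into_space)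
  also have "\<dots> = (\<Sum>r<p ^ N. F r) / of_nat (p ^ N)"
    by (simp add: sum_divide_distrib[symmetric])
  finally show ?thesis .
qed

lemma avg_integral_cong: fixes F :: "nat \<Rightarrow> complex" and g :: "(nat \<Rightarrow> nat) \<Rightarrow> complex"
  assumes "p > 0" "\<And>w. w \<in> Zp p \<Longrightarrow> g w = F (zp_res p w N)"
  shows "(\<integral>w. g w \<partial>zp_haar p) = (\<Sum>r<p ^ N. F r) / of_nat (p ^ N)"
proof -
  have "(\<integral>w. g w \<partial>zp_haar p) = (\<integral>w. F (zp_res p w N) \<partial>zp_haar p)"
    by (rule Bochner_Integration.integral_cong[OF refl]) (simp add: assms(2) space_zp_haar)
  then show ?thesis using avg_integral[OF assms(1)] by simp
qed


definition Uu :: "nat \<Rightarrow> nat \<Rightarrow> nat set" where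
  "Uu p N = {r. r < p ^ N \<and> r mod p \<noteq> 0}"

definition Ui :: "nat \<Rightarrow> nat \<Rightarrow> nat \<Rightarrow> nat set" where
  "Ui p N i = {r \<in> Uu p N. r mod p ^ i = 1}"

lemma Uu_finite: "finite (Uu p N)" by (simp add: Uu_def)
lemma Ui_finite: "finite (Ui p N i)" by (simp add: Ui_def Uu_def)

lemma Uu_coprime: fixes p a :: nat assumes "prime p" "a mod p \<noteq> 0" shows "coprime a (p ^ i)"
proof -
  have "\<not> p dvd a"
  proof
    assume "p dvd a" then have "a mod p = 0" by simp
    then show False using assms(2) by simp
  qed
  have "coprime p a" by (rule prime_imp_coprime[OF assms(1) \<open>\<not> p dvd a\<close>])
  then have "coprime a p" by (simp add: coprime_commute)
  then show ?thesis by (simp add: coprime_power_right_iff)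
qed

lemma Uu_mult: assumes "prime p" "N \<ge> 1" "a \<in> Uu p N" "b \<in> Uu p N" shows "a * b mod p ^ N \<in> Uu p N"
proof -
  have p0: "p > 0" using prime_gt0[OF assms(1)] .
  have "p dvd p ^ N" using le_imp_power_dvd[OF assms(2), of p] by simp
  then have "a * b mod p ^ N mod p = a * b mod p" by (simp add: mod_mod_cancel)
  moreover have "\<not> p dvd a" "\<not> p dvd b" using assms(3,4) by (auto simp: Uu_def)
  then have "\<not> p dvd a * b" using assms(1) by (simp add: prime_dvd_mult_iff)
  then have "a * b mod p \<noteq> 0" by (metis dvd_eq_mod_eq_0)
  ultimately show ?thesis using p0 by (simp add: Uu_def)
qed

lemma Uu_inj: assumes "prime p" "a \<in> Uu p N" shows "inj_on (\<lambda>s. a * s mod p ^ N) (Uu p N)"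
proof
  fix s t assume st: "s \<in> Uu p N" "t \<in> Uu p N" "a * s mod p ^ N = a * t mod p ^ N"
  then have "[a * s = a * t] (mod p ^ N)" by (simp add: cong_def)
  moreover have "coprime a (p ^ N)" using Uu_coprime[OF assms(1)] assms(2) by (simp add: Uu_def)
  ultimately have "[s = t] (mod p ^ N)" using cong_mult_lcancel_nat by blast
  then show "s = t" using st by (simp add: Uu_def cong_def)
qed

lemma mod_pow_le: "i \<le> N \<Longrightarrow> x mod (p::nat) ^ N mod p ^ i = x mod p ^ i"
  by (simp add: mod_mod_cancel le_imp_power_dvd)

lemma Ui_mult: assumes "prime p" "N \<ge> 1" "i \<le> N" "1 \<le> i" "a \<in> Ui p N i" "b \<in> Ui p N i" shows "a * b mod p ^ N \<in> Ui p N i"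
proof -
  have "a * b mod p ^ N mod p ^ i = (a mod p ^ i) * (b mod p ^ i) mod p ^ i"
    using assms(3) by (simp add: mod_pow_le mod_mult_eq)
  also have "\<dots> = 1 mod p ^ i" using assms(5,6) by (simp add: Ui_def)
  also have "\<dots> = 1" using assms(4) prime_ge2[OF assms(1)] by (simp add: Ui_def)
  finally show ?thesis using Uu_mult[OF assms(1,2)] assms(5,6) by (simp add: Ui_def)
qed

lemma bij_mult: assumes "finite S" "S \<subseteq> Uu p N" "inj_on f (Uu p N)" "\<And>s. s \<in> S \<Longrightarrow> f s \<in> S"
  shows "bij_betw f S S"
proof -
  have "inj_on f S" using assms(2,3) inj_on_subset by blast
  moreover have "f ` S = S" using endo_inj_surj[OF assms(1) _ \<open>inj_on f S\<close>] assms(4) by blast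
  ultimately show ?thesis by (simp add: bij_betw_def)
qed

lemma char_sum_zero: fixes X :: "nat \<Rightarrow> complex"
  assumes "finite S" "bij_betw f S S" "\<And>s. s \<in> S \<Longrightarrow> X (f s) = c * X s" "c \<noteq> 1"
  shows "(\<Sum>s\<in>S. X s) = 0"
proof -
  have "(\<Sum>s\<in>S. X s) = (\<Sum>s\<in>S. X (f s))" using sum.reindex_bij_betw[OF assms(2), of X] by simp
  also have "\<dots> = c * (\<Sum>s\<in>S. X s)" using assms(3) by (simp add: sum_distrib_left)
  finally have "(1 - c) * (\<Sum>s\<in>S. X s) = 0" by (simp add: algebra_simps)
  then show ?thesis using assms(4) by simp
qed

lemma coset_cond: assumes "prime p" "1 \<le> i" "i \<le> N" "s0 \<in> Uu p N"
  shows "(s0 * s mod p ^ N) mod p ^ i = s0 mod p ^ i \<longleftrightarrow> s mod p ^ i = 1"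
proof -
  have p2: "p \<ge> 2" using prime_ge2[OF assms(1)] .
  have pi: "p ^ i > 1" using p2 assms(2) by (intro one_less_power) auto
  have "(s0 * s mod p ^ N) mod p ^ i = s0 mod p ^ i \<longleftrightarrow> [s0 * s = s0 * 1] (mod p ^ i)"
    using assms(3) by (simp add: cong_def mod_pow_le)
  also have "\<dots> \<longleftrightarrow> [s = 1] (mod p ^ i)"
  proof -
    have "coprime s0 (p ^ i)" using Uu_coprime[OF assms(1)] assms(4) by (simp add: Uu_def)
    from cong_mult_lcancel_nat[OF this, of s 1] show ?thesis .
  qed
  also have "\<dots> \<longleftrightarrow> s mod p ^ i = 1" using pi assms(2) p2 by (simp add: cong_def)
  finally show ?thesis .
qed


lemma mod_shift: assumes "j < m" "k < (m::nat)"
  shows "(k + m - j) mod m = (if j \<le> k then k - j else k + m - j)"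
proof (cases "j \<le> k")
  case True
  then have "k + m - j = (k - j) + m" by simp
  moreover have "k - j < m" using assms by simp
  ultimately show ?thesis using True by (metis mod_add_self2 mod_less)
next
  case False then show ?thesis using assms by simp
qed

lemma mod_add_lt: assumes "e < m" "j < (m::nat)"
  shows "(e + j) mod m = (if e + j < m then e + j else e + j - m)"
proof (cases "e + j < m")
  case True then show ?thesis by simp
next
  case False
  then have "e + j = (e + j - m) + m" by simp
  moreover have "e + j - m < m" using assms by simp
  ultimately show ?thesis using False by (metis mod_add_self2 mod_less)
qed

lemma sum_reindex_k: fixes g :: "nat \<Rightarrow> 'a::comm_monoid_add" assumes "j < m"
  shows "(\<Sum>k\<in>{..<m} - {j}. g ((k + m - j) mod m)) = (\<Sum>e\<in>{1..<m}. g e)"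
proof (rule sum.reindex_bij_witness[where j = "\<lambda>k. (k + m - j) mod m" and i = "\<lambda>e. (e + j) mod m"])
  fix a assume a: "a \<in> {..<m} - {j}"
  then have am: "a < m" "a \<noteq> j" by auto
  show "((a + m - j) mod m + j) mod m = a"
    using mod_shift[OF assms am(1)] mod_add_lt[of _ m j] assms am by auto
  show "(a + m - j) mod m \<in> {1..<m}"
    using mod_shift[OF assms am(1)] assms am by auto
  show "g ((a + m - j) mod m) = g ((a + m - j) mod m)" by simp
next
  fix b assume b: "b \<in> {1..<m}"
  then have bm: "b < m" "b \<ge> 1" by auto
  show "((b + j) mod m + m - j) mod m = b"
    using mod_add_lt[OF bm(1) assms] mod_shift[OF assms, of "(b + j) mod m"] assms bm by auto
  show "(b + j) mod m \<in> {..<m} - {j}"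
    using mod_add_lt[OF bm(1) assms] assms bm by auto
qed

definition Hper :: "real \<Rightarrow> nat \<Rightarrow> nat \<Rightarrow> real" where
  "Hper P m e = (P ^ (m - e) + P ^ e) / (P ^ m - 1)"

lemma Hv_core: fixes P :: real assumes "P > 1" "0 < d" "d < m"
  shows "(1 / P ^ a) * (1 / P ^ (a + d)) / (1 / P ^ a)\<^sup>2
     + 1 / (P ^ m - 1) * ((1 / P ^ a) / (1 / P ^ (a + d)) + (1 / P ^ (a + d)) / (1 / P ^ a))
     = (P ^ (m - d) + P ^ d) / (P ^ m - 1)"
proof -
  obtain e where me: "m = d + e" using assms(3) by (metis less_imp_add_positive)
  have Pm: "P ^ m - 1 \<noteq> 0" using assms by (metis less_numeral_extra(3) one_less_power right_minus_eq
        order_less_irrefl assms(2) assms(3) gr_implies_not0 neq0_conv)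
  have P0: "P \<noteq> 0" using assms by simp
  have "(1 / P ^ a) * (1 / P ^ (a + d)) / (1 / P ^ a)\<^sup>2 = 1 / P ^ d"
    using P0 by (simp add: power_add field_simps power2_eq_square)
  moreover have "(1 / P ^ a) / (1 / P ^ (a + d)) = P ^ d" using P0 by (simp add: power_add field_simps)
  moreover have "(1 / P ^ (a + d)) / (1 / P ^ a) = 1 / P ^ d" using P0 by (simp add: power_add field_simps)
  moreover have "1 / P ^ d + 1 / (P ^ m - 1) * (P ^ d + 1 / P ^ d) = (P ^ (m - d) + P ^ d) / (P ^ m - 1)"
    using Pm P0 unfolding me by (simp add: power_add field_simps)
  ultimately show ?thesis by simp
qed

lemma Hv_eq: fixes P :: real assumes "P > 1" "j < m" "k < m" "k \<noteq> j"
  shows "(1 / P ^ j) * (1 / P ^ k) / (1 / P ^ min j k)\<^sup>2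
     + 1 / (P ^ m - 1) * ((1 / P ^ j) / (1 / P ^ k) + (1 / P ^ k) / (1 / P ^ j))
     = Hper P m ((k + m - j) mod m)"
proof (cases "j < k")
  case True
  obtain d where d: "k = j + d" "0 < d" using True less_imp_add_positive by blast
  have "d < m" using d assms by simp
  show ?thesis using Hv_core[OF assms(1) d(2) \<open>d < m\<close>, of j] mod_shift[OF assms(2,3)] d True
    by (simp add: Hper_def)
next
  case False
  then have "k < j" using assms(4) by simp
  obtain d where d: "j = k + d" "0 < d" using \<open>k < j\<close> less_imp_add_positive by blast
  have "d < m" using d assms by simp
  have e: "(k + m - j) mod m = m - d" using mod_shift[OF assms(2,3)] d \<open>k < j\<close> by simp
  have "m - (m - d) = d" using \<open>d < m\<close> by simp
  then show ?thesis using Hv_core[OF assms(1) d(2) \<open>d < m\<close>, of k] e d \<open>k < j\<close>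
    by (simp add: Hper_def ac_simps)
qed

lemma telescope: fixes P :: real assumes "P \<noteq> 0"
  shows "1 + (\<Sum>i\<in>{1..L}. P ^ (2 * i) * (1 - 1 / P\<^sup>2)) = P ^ (2 * L)"
proof (induction L)
  case 0 then show ?case by simp
next
  case (Suc L)
  define y where "y = P ^ (2 * L)"
  have e: "P ^ (2 * Suc L) = y * P\<^sup>2" unfolding y_def by (simp add: power2_eq_square)
  have "1 + (\<Sum>i\<in>{1..Suc L}. P ^ (2 * i) * (1 - 1 / P\<^sup>2)) = (1 + (\<Sum>i\<in>{1..L}. P ^ (2 * i) * (1 - 1 / P\<^sup>2))) + P ^ (2 * Suc L) * (1 - 1 / P\<^sup>2)"
    by simp
  also have "\<dots> = y + y * P\<^sup>2 * (1 - 1 / P\<^sup>2)" using Suc.IH e by (simp add: y_def)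
  also have "\<dots> = y * P\<^sup>2" using assms by (simp add: field_simps)
  finally show ?case using e by simp
qed

lemma Gsum: fixes P :: real assumes "P > 1" "n \<ge> 1"
  shows "(\<Sum>i\<in>{1..<n}. P ^ (2 * i) * (1 - 1 / P\<^sup>2) / P ^ i) = (P + 1) * (P ^ n - P) / P\<^sup>2"
  using assms(2)
proof (induction n rule: dec_induct)
  case base then show ?case by simp
next
  case (step n)
  define y where "y = P ^ n"
  have e1: "P ^ (2 * n) = y * y" unfolding y_def by (simp add: power_mult power2_eq_square mult.commute)
  have e2: "P ^ Suc n = P * y" unfolding y_def by simp
  have "(\<Sum>i\<in>{1..<Suc n}. P ^ (2 * i) * (1 - 1 / P\<^sup>2) / P ^ i) = (\<Sum>i\<in>{1..<n}. P ^ (2 * i) * (1 - 1 / P\<^sup>2) / P ^ i) + P ^ (2 * n) * (1 - 1 / P\<^sup>2) / P ^ n"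
    using step(1) by simp
  also have "\<dots> = (P + 1) * (y - P) / P\<^sup>2 + y * y * (1 - 1 / P\<^sup>2) / y"
    using step(3) e1 by (simp add: y_def)
  also have "\<dots> = (P + 1) * (P * y - P) / P\<^sup>2"
  proof -
    have "y \<noteq> 0" "P \<noteq> 0" using assms(1) by (auto simp: y_def)
    then show ?thesis by (simp add: field_simps power2_eq_square)
  qed
  finally show ?case unfolding e2 .
qed


lemma unit_root_norm: fixes z :: complex assumes "z ^ m = 1" "m \<ge> 1" shows "cmod z = 1"
  using power_eq_1_iff[OF assms(1)] assms(2) by auto

lemma unit_root_cnj: fixes z :: complex assumes "z ^ m = 1" "m \<ge> 1" shows "z * cnj z = 1"
proof -
  have "complex_of_real ((cmod z)\<^sup>2) = z * cnj z" by (rule complex_norm_square)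
  then show ?thesis using unit_root_norm[OF assms] by simp
qed

lemma geo_part: fixes z :: complex and P :: real assumes "P > 1" "z ^ m = 1" "m \<ge> 1"
  shows "(\<Sum>e\<in>{1..<m}. (of_real P * z) ^ e) = of_real (P ^ m - 1) / (of_real P * z - 1) - 1"
proof -
  have nz: "of_real P * z \<noteq> 1"
  proof
    assume "of_real P * z = 1"
    then have "cmod (of_real P * z) = 1" by simp
    then show False using unit_root_norm[OF assms(2,3)] assms(1) by (simp add: norm_mult)
  qed
  have "{..<m} = insert 0 {1..<m}" using assms(3) by auto
  then have "(\<Sum>e<m. (of_real P * z) ^ e) = 1 + (\<Sum>e\<in>{1..<m}. (of_real P * z) ^ e)" by simp
  moreover have "(\<Sum>e<m. (of_real P * z) ^ e) = ((of_real P * z) ^ m - 1) / (of_real P * z - 1)"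
    by (rule geometric_sum[OF nz])
  moreover have "(of_real P * z) ^ m = of_real (P ^ m)" using assms(2) by (simp add: power_mult_distrib)
  ultimately show ?thesis by (simp add: algebra_simps)
qed

lemma div_aux: fixes Q a b :: complex assumes "Q \<noteq> 0"
  shows "((Q / a - 1) + (Q / b - 1)) / Q = 1 / a + 1 / b - 2 / Q"
proof -
  have "((Q / a - 1) + (Q / b - 1)) / Q = (Q / a) / Q + (Q / b) / Q - 2 / Q"
    by (simp add: diff_divide_distrib add_divide_distrib)
  moreover have "(Q / a) / Q = 1 / a" "(Q / b) / Q = 1 / b" using assms by (auto simp: field_simps)
  ultimately show ?thesis by simp
qed

lemma S2: fixes w :: complex and P :: real assumes "P > 1" "w ^ m = 1" "m \<ge> 1"
  shows "(\<Sum>e\<in>{1..<m}. complex_of_real (Hper P m e) * w ^ e)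
     = 1 / (of_real P * w - 1) + 1 / (of_real P * cnj w - 1) - of_real (2 / (P ^ m - 1))"
proof -
  define Q where "Q = P ^ m - 1"
  have Q0: "Q > 0" unfolding Q_def using assms by (simp add: one_less_power)
  have wc: "w * cnj w = 1" using unit_root_cnj[OF assms(2,3)] .
  have cm: "cnj w ^ m = 1" using assms(2) by (metis complex_cnj_one complex_cnj_power)
  have nz1: "of_real P * w - 1 \<noteq> 0" and nz2: "of_real P * cnj w - 1 \<noteq> 0"
  proof -
    have "cmod w = 1" "cmod (cnj w) = 1" using unit_root_norm[OF assms(2,3)] by auto
    then show "of_real P * w - 1 \<noteq> 0" "of_real P * cnj w - 1 \<noteq> 0" using assms(1)
      by (auto simp: norm_mult dest!: arg_cong[where f = cmod])
  qed
  have rev: "(\<Sum>e\<in>{1..<m}. complex_of_real (P ^ (m - e)) * w ^ e) = (\<Sum>e\<in>{1..<m}. (of_real P * cnj w) ^ e)"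
  proof (rule sum.reindex_bij_witness[where j = "\<lambda>e. m - e" and i = "\<lambda>e. m - e"])
    fix a assume a: "a \<in> {1..<m}"
    show "m - (m - a) = a" "m - a \<in> {1..<m}" using a by auto
    have "cnj w ^ (m - a) = cnj w ^ (m - a) * (w ^ a * w ^ (m - a))"
      using assms(2) a by (simp add: power_add[symmetric])
    also have "\<dots> = w ^ a * (w * cnj w) ^ (m - a)" by (simp add: power_mult_distrib algebra_simps)
    finally have "cnj w ^ (m - a) = w ^ a" using wc by simp
    then show "(of_real P * cnj w) ^ (m - a) = complex_of_real (P ^ (m - a)) * w ^ a"
      by (simp add: power_mult_distrib)
  next
    fix b assume b: "b \<in> {1..<m}"
    show "m - (m - b) = b" "m - b \<in> {1..<m}" using b by auto
  qed
  have "(\<Sum>e\<in>{1..<m}. complex_of_real (Hper P m e) * w ^ e)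
      = (\<Sum>e\<in>{1..<m}. (complex_of_real (P ^ (m - e)) * w ^ e + (of_real P * w) ^ e) / of_real Q)"
    by (intro sum.cong refl) (simp add: Hper_def Q_def power_mult_distrib field_simps)
  also have "\<dots> = ((\<Sum>e\<in>{1..<m}. complex_of_real (P ^ (m - e)) * w ^ e) + (\<Sum>e\<in>{1..<m}. (of_real P * w) ^ e)) / of_real Q"
    by (simp add: add_divide_distrib sum.distrib sum_divide_distrib)
  also have "\<dots> = ((of_real Q / (of_real P * cnj w - 1) - 1) + (of_real Q / (of_real P * w - 1) - 1)) / of_real Q"
    unfolding rev geo_part[OF assms] geo_part[OF assms(1) cm assms(3)] Q_def by simp
  also have "\<dots> = 1 / (of_real P * w - 1) + 1 / (of_real P * cnj w - 1) - of_real (2 / Q)"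
    using Q0 div_aux[of "of_real Q" "of_real P * cnj w - 1" "of_real P * w - 1"] by (simp add: algebra_simps)
  finally show ?thesis by (simp add: Q_def)
qed



lemma triv_alg: fixes w :: complex and P :: real assumes "P > 1" "w * cnj w = 1"
  shows "- complex_of_real (P * (1 - 1 / P)\<^sup>2 / (1 - 1 / P\<^sup>2)) * (of_real (1 - 1 / P) *
           ((1 / (of_real P * w - 1) + 1 / (of_real P * cnj w - 1) - X) - (1 / (of_real P * 1 - 1) + 1 / (of_real P * cnj 1 - 1) - X)))
       = of_real P * (of_real P - 1) * (2 - w - cnj w) / ((of_real P)\<^sup>2 - of_real P * (w + cnj w) + 1)"
proof -
  define Pc where "Pc = complex_of_real P"
  define t where "t = w + cnj w"
  define D where "D = Pc\<^sup>2 - Pc * t + 1"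
  have nz1: "Pc * w - 1 \<noteq> 0" and nz2: "Pc * cnj w - 1 \<noteq> 0"
  proof -
    have "complex_of_real ((cmod w)\<^sup>2) = 1" using complex_norm_square[of w] assms(2) by simp
    then have "(cmod w)\<^sup>2 = 1" by (simp only: of_real_eq_1_iff)
    then have "cmod w = 1" using norm_ge_zero[of w] by (auto simp: power2_eq_1_iff)
    then have "cmod (cnj w) = 1" by simp
    then show "Pc * w - 1 \<noteq> 0" "Pc * cnj w - 1 \<noteq> 0" using assms(1) \<open>cmod w = 1\<close>
      by (auto simp: norm_mult Pc_def dest!: arg_cong[where f = cmod])
  qed
  have Dab: "(Pc * w - 1) * (Pc * cnj w - 1) = D"
    unfolding D_def t_def using assms(2) by (simp add: algebra_simps power2_eq_square)
  have Dnz: "D \<noteq> 0" using Dab nz1 nz2 by (metis mult_eq_0_iff)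
  have P1: "Pc - 1 \<noteq> 0" "Pc + 1 \<noteq> 0" "Pc \<noteq> 0" using assms(1)
    by (auto simp: complex_eq_iff Pc_def)
  have s1: "1 / (Pc * w - 1) + 1 / (Pc * cnj w - 1) = (Pc * t - 2) / D"
  proof -
    have "1 / (Pc * w - 1) + 1 / (Pc * cnj w - 1) = ((Pc * cnj w - 1) + (Pc * w - 1)) / ((Pc * w - 1) * (Pc * cnj w - 1))"
      using nz1 nz2 by (simp add: field_simps)
    then show ?thesis unfolding Dab t_def by (simp add: algebra_simps)
  qed
  have s0: "1 / (Pc * 1 - 1) + 1 / (Pc * cnj 1 - 1) = 2 / (Pc - 1)" by simp
  have s2: "(Pc * t - 2) / D - 2 / (Pc - 1) = Pc * (Pc + 1) * (t - 2) / ((Pc - 1) * D)"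
  proof -
    have "(Pc * t - 2) / D - 2 / (Pc - 1) = ((Pc * t - 2) * (Pc - 1) - 2 * D) / ((Pc - 1) * D)"
      using Dnz P1 by (simp add: field_simps)
    also have "(Pc * t - 2) * (Pc - 1) - 2 * D = Pc * (Pc + 1) * (t - 2)"
      unfolding D_def by (simp add: algebra_simps power2_eq_square)
    finally show ?thesis .
  qed
  have c: "complex_of_real (P * (1 - 1 / P)\<^sup>2 / (1 - 1 / P\<^sup>2)) = Pc * (Pc - 1) / (Pc + 1)"
  proof -
    have P0: "P \<noteq> 0" and Pm: "P - 1 \<noteq> 0" and Pp: "P + 1 \<noteq> 0" using assms(1) by auto
    define A where "A = (P - 1) / P"
    define B where "B = (P + 1) / P"
    have A0: "A \<noteq> 0" and B0: "B \<noteq> 0" using P0 Pm Pp by (auto simp: A_def B_def)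
    have a: "1 - 1 / P = A" using P0 by (simp add: A_def field_simps)
    have b: "1 - 1 / P\<^sup>2 = A * B" using P0 by (simp add: A_def B_def field_simps power2_eq_square)
    have "P * (1 - 1 / P)\<^sup>2 / (1 - 1 / P\<^sup>2) = P * A / B" unfolding a b using A0 B0
      by (simp add: power2_eq_square)
    also have "\<dots> = (P - 1) / ((P + 1) / P)" using P0 by (simp add: A_def B_def)
    also have "\<dots> = P * (P - 1) / (P + 1)" by (simp add: divide_divide_eq_right mult.commute)
    finally have "P * (1 - 1 / P)\<^sup>2 / (1 - 1 / P\<^sup>2) = P * (P - 1) / (P + 1)" .
    then show ?thesis by (simp add: Pc_def)
  qed
  have c2: "complex_of_real (1 - 1 / P) = (Pc - 1) / Pc" using P1 by (simp add: Pc_def field_simps)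
  have "- complex_of_real (P * (1 - 1 / P)\<^sup>2 / (1 - 1 / P\<^sup>2)) * (of_real (1 - 1 / P) *
           ((1 / (Pc * w - 1) + 1 / (Pc * cnj w - 1) - X) - (1 / (Pc * 1 - 1) + 1 / (Pc * cnj 1 - 1) - X)))
      = - (Pc * (Pc - 1) / (Pc + 1)) * ((Pc - 1) / Pc * (Pc * (Pc + 1) * (t - 2) / ((Pc - 1) * D)))"
    unfolding c c2 s0 s1 s2[symmetric] by simp
  also have "\<dots> = - ((Pc * (Pc - 1) * (Pc - 1) * (Pc * (Pc + 1) * (t - 2))) / ((Pc + 1) * Pc * ((Pc - 1) * D)))"
    by (simp add: times_divide_times_eq mult.assoc)
  also have "(Pc * (Pc - 1) * (Pc - 1) * (Pc * (Pc + 1) * (t - 2))) = (Pc * (Pc + 1) * (Pc - 1)) * (Pc * (Pc - 1) * (t - 2))"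
    by (simp add: algebra_simps)
  also have "(Pc + 1) * Pc * ((Pc - 1) * D) = (Pc * (Pc + 1) * (Pc - 1)) * D"
    by (simp add: algebra_simps)
  also have "(Pc * (Pc + 1) * (Pc - 1)) * (Pc * (Pc - 1) * (t - 2)) / ((Pc * (Pc + 1) * (Pc - 1)) * D)
      = (Pc * (Pc - 1) * (t - 2)) / D"
    using P1 by (intro mult_divide_mult_cancel_left) auto
  also have "- ((Pc * (Pc - 1) * (t - 2)) / D) = Pc * (Pc - 1) * (2 - t) / D"
    by (simp add: algebra_simps minus_divide_left)
  finally show ?thesis unfolding Pc_def t_def D_def by (simp add: algebra_simps)
qed


definition chid :: "nat \<Rightarrow> ((nat \<Rightarrow> nat) \<Rightarrow> complex) \<Rightarrow> nat \<Rightarrow> complex" where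
  "chid p chi r = chi (dig p r)"

lemma sum_if_card: fixes P :: "nat \<Rightarrow> bool"
  shows "(\<Sum>r<q. if P r then 1 else 0 :: complex) = of_nat (card {r \<in> {..<q}. P r})"
proof -
  have "(\<Sum>r<q. if P r then 1 else 0 :: complex) = (\<Sum>r\<in>{r \<in> {..<q}. P r}. 1)"
    using sum.inter_filter[of "{..<q}" "\<lambda>_. (1::complex)" P] by simp
  also have "\<dots> = of_nat (card {r \<in> {..<q}. P r})" by simp
  finally show ?thesis .
qed

lemma card_Uu: assumes pr: "prime p" and N1: "1 \<le> N"
  shows "of_nat (card (Uu p N)) / of_nat (p ^ N) = (1 - 1 / of_nat p :: complex)"
proof -
  have p0: "p > 0" using prime_gt0[OF pr] .
  define g where "g = (\<lambda>w::nat\<Rightarrow>nat. if w 0 \<noteq> 0 then 1 else (0::complex))"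
  have "(\<integral>w. g w \<partial>zp_haar p) = (\<Sum>r<p ^ N. if r mod p \<noteq> 0 then 1 else 0) / of_nat (p ^ N)"
  proof (rule avg_integral_cong[OF p0])
    fix w assume "w \<in> Zp p"
    then show "g w = (if zp_res p w N mod p \<noteq> 0 then 1 else 0)"
      using zp_res_mod_p[OF _ N1, of w p] by (simp add: g_def)
  qed
  moreover have "(\<integral>w. g w \<partial>zp_haar p) = (\<Sum>r<p ^ 1. if r \<noteq> 0 then 1 else 0) / of_nat (p ^ 1)"
    by (rule avg_integral_cong[OF p0]) (simp add: g_def zp_res_def)
  moreover have "(\<Sum>r<p ^ N. if r mod p \<noteq> 0 then 1 else 0 :: complex) = of_nat (card (Uu p N))"
  proof -
    have "{r \<in> {..<p ^ N}. r mod p \<noteq> 0} = Uu p N" by (auto simp: Uu_def)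
    then show ?thesis unfolding sum_if_card by simp
  qed
  moreover have "(\<Sum>r<p ^ 1. if r \<noteq> 0 then 1 else 0 :: complex) = of_nat (p - 1)"
  proof -
    have "{r \<in> {..<p}. r \<noteq> 0} = {..<p} - {0}" by auto
    then show ?thesis unfolding sum_if_card using p0 by simp
  qed
  ultimately have "of_nat (card (Uu p N)) / of_nat (p ^ N) = (of_nat (p - 1) / of_nat (p ^ 1) :: complex)"
    by metis
  also have "\<dots> = 1 - 1 / of_nat p" using p0 by (simp add: of_nat_diff diff_divide_distrib)
  finally show ?thesis .
qed

lemma card_Ui: assumes pr: "prime p" and "1 \<le> i" "i \<le> N"
  shows "of_nat (card (Ui p N i)) / of_nat (p ^ N) = (1 / of_nat p ^ i :: complex)"
proof -
  have p0: "p > 0" using prime_gt0[OF pr] .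
  have p2: "p \<ge> 2" using prime_ge2[OF pr] .
  have pi: "p ^ i > 1" using p2 assms(2) by (intro one_less_power) auto
  define g where "g = (\<lambda>w::nat\<Rightarrow>nat. if zp_res p w i = 1 then 1 else (0::complex))"
  have "(\<integral>w. g w \<partial>zp_haar p) = (\<Sum>r<p ^ N. if r mod p ^ i = 1 then 1 else 0) / of_nat (p ^ N)"
    by (rule avg_integral_cong[OF p0]) (simp add: g_def zp_res_mod assms(3))
  moreover have "(\<integral>w. g w \<partial>zp_haar p) = (\<Sum>r<p ^ i. if r = 1 then 1 else 0) / of_nat (p ^ i)"
    by (rule avg_integral_cong[OF p0]) (simp add: g_def)
  moreover have "(\<Sum>r<p ^ N. if r mod p ^ i = 1 then 1 else 0 :: complex) = of_nat (card (Ui p N i))"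
  proof -
    have "{r \<in> {..<p ^ N}. r mod p ^ i = 1} = Ui p N i"
    proof -
      have "r mod p = 1" if "r mod p ^ i = 1" for r
      proof -
        have "p dvd p ^ i" using le_imp_power_dvd[OF assms(2), of p] by simp
        then have "r mod p ^ i mod p = r mod p" by (simp add: mod_mod_cancel)
        then show ?thesis using that p2 by simp
      qed
      then show ?thesis by (auto simp: Ui_def Uu_def)
    qed
    then show ?thesis unfolding sum_if_card by simp
  qed
  moreover have "(\<Sum>r<p ^ i. if r = 1 then 1 else 0 :: complex) = 1"
    using pi by (simp add: sum.delta)
  ultimately show ?thesis using p0 by simp
qed

context
  fixes p N :: nat and chi :: "(nat \<Rightarrow> nat) \<Rightarrow> complex"
  assumes pr: "prime p" and N1: "1 \<le> N" and chr: "zp_character p chi"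
    and LC: "\<forall>u\<in>Zp_units p. \<forall>w\<in>Zp_units p. zp_res p u N = zp_res p w N \<longrightarrow> chi u = chi w"
begin

lemma c_p0: "p > 0" using prime_gt0[OF pr] .

lemma dig_unit: "r \<in> Uu p N \<Longrightarrow> dig p r \<in> Zp_units p"
  using dig_Zp[OF c_p0, of r] by (simp add: Zp_units_def Uu_def dig_def)

lemma dig_resN: "r \<in> Uu p N \<Longrightarrow> zp_res p (dig p r) N = r"
  by (simp add: zp_res_dig Uu_def)

lemma res_Uu: "w \<in> Zp_units p \<Longrightarrow> zp_res p w N \<in> Uu p N"
  using zp_res_lt[OF units_Zp, of w p N] zp_res_mod_p[OF units_Zp, of w p N] N1
  by (simp add: Uu_def Zp_units_def)

lemma unit_iff: "w \<in> Zp p \<Longrightarrow> (w \<in> Zp_units p \<longleftrightarrow> zp_res p w N \<in> Uu p N)"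
  using zp_res_lt[of w p N] zp_res_mod_p[of w p N] N1 by (auto simp: Uu_def Zp_units_def)

lemma chi_res: "w \<in> Zp_units p \<Longrightarrow> chi w = chid p chi (zp_res p w N)"
  unfolding chid_def using LC dig_unit[OF res_Uu] dig_resN[OF res_Uu] by metis

lemma chid_mult: assumes "a \<in> Uu p N" "b \<in> Uu p N"
  shows "chid p chi (a * b mod p ^ N) = chid p chi a * chid p chi b"
proof -
  have U: "dig p a \<in> Zp_units p" "dig p b \<in> Zp_units p" using dig_unit assms by auto
  have MU: "zp_mult p (dig p a) (dig p b) \<in> Zp_units p" using zp_mult_unit[OF pr U] .
  have "zp_res p (zp_mult p (dig p a) (dig p b)) N = a * b mod p ^ N"
    using zp_res_mult[OF c_p0 units_Zp[OF U(1)] units_Zp[OF U(2)], of N] dig_resN assms by simp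
  then have "chid p chi (a * b mod p ^ N) = chi (zp_mult p (dig p a) (dig p b))"
    using chi_res[OF MU] by simp
  also have "\<dots> = chid p chi a * chid p chi b"
    using chr U unfolding zp_character_def chid_def by blast
  finally show ?thesis .
qed

lemma sum_Uu_zero: assumes "a \<in> Uu p N" "chid p chi a \<noteq> 1"
  shows "(\<Sum>s\<in>Uu p N. chid p chi s) = 0"
proof (rule char_sum_zero[OF Uu_finite _ _ assms(2)])
  show "bij_betw (\<lambda>s. a * s mod p ^ N) (Uu p N) (Uu p N)"
    by (rule bij_mult[OF Uu_finite subset_refl Uu_inj[OF pr assms(1)]]) (use Uu_mult[OF pr N1 assms(1)] in blast)
  show "\<And>s. s \<in> Uu p N \<Longrightarrow> chid p chi (a * s mod p ^ N) = chid p chi a * chid p chi s"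
    using chid_mult assms(1) by blast
qed

lemma sum_Ui_zero: assumes "1 \<le> i" "i \<le> N" "a \<in> Ui p N i" "chid p chi a \<noteq> 1"
  shows "(\<Sum>s\<in>Ui p N i. chid p chi s) = 0"
proof (rule char_sum_zero[OF Ui_finite _ _ assms(4)])
  have aU: "a \<in> Uu p N" using assms(3) by (simp add: Ui_def)
  show "bij_betw (\<lambda>s. a * s mod p ^ N) (Ui p N i) (Ui p N i)"
  proof (rule bij_mult[OF Ui_finite _ Uu_inj[OF pr aU]])
    show "Ui p N i \<subseteq> Uu p N" by (auto simp: Ui_def)
    show "\<And>s. s \<in> Ui p N i \<Longrightarrow> a * s mod p ^ N \<in> Ui p N i"
      using Ui_mult[OF pr N1 assms(2,1,3)] by blast
  qed
  show "\<And>s. s \<in> Ui p N i \<Longrightarrow> chid p chi (a * s mod p ^ N) = chid p chi a * chid p chi s"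
    using chid_mult aU by (auto simp: Ui_def)
qed

end


lemma sum_if_sub: fixes f :: "nat \<Rightarrow> 'a::comm_monoid_add"
  assumes "finite A" "B \<subseteq> A" shows "(\<Sum>x\<in>A. if x \<in> B then f x else 0) = (\<Sum>x\<in>B. f x)"
proof -
  have "(\<Sum>x\<in>A. if x \<in> B then f x else 0) = sum f (A \<inter> B)" using sum.inter_restrict[OF assms(1), of f B] by simp
  moreover have "A \<inter> B = B" using assms(2) by blast
  ultimately show ?thesis by simp
qed

lemma Uu_sub: "Uu p N \<subseteq> {..<p ^ N}" by (auto simp: Uu_def)

lemma least_diff: assumes "u \<in> Zp p" "w \<in> Zp p" "zp_res p w N \<noteq> zp_res p u N"
  shows "(LEAST i. u i \<noteq> w i) < N"
    and "\<And>i. i \<le> N \<Longrightarrow> (zp_res p w N mod p ^ i = zp_res p u N mod p ^ i \<longleftrightarrow> i \<le> (LEAST i. u i \<noteq> w i))"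
proof -
  obtain l where l: "l < N" "u l \<noteq> w l" using zp_res_eq_iff[OF assms(1,2), of N] assms(3) by auto
  show LN: "(LEAST i. u i \<noteq> w i) < N" using Least_le[of "\<lambda>i. u i \<noteq> w i" l] l by simp
  fix i assume iN: "i \<le> N"
  have "zp_res p w N mod p ^ i = zp_res p u N mod p ^ i \<longleftrightarrow> zp_res p w i = zp_res p u i"
    using zp_res_mod[OF assms(1) iN] zp_res_mod[OF assms(2) iN] by simp
  also have "\<dots> \<longleftrightarrow> (\<forall>l<i. u l = w l)" using zp_res_eq_iff[OF assms(2,1), of i] by auto
  also have "\<dots> \<longleftrightarrow> i \<le> (LEAST i. u i \<noteq> w i)"
  proof
    assume h: "\<forall>l<i. u l = w l"
    show "i \<le> (LEAST i. u i \<noteq> w i)"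
    proof (rule ccontr)
      assume "\<not> i \<le> (LEAST i. u i \<noteq> w i)"
      then have "(LEAST i. u i \<noteq> w i) < i" by simp
      then have "u (LEAST i. u i \<noteq> w i) = w (LEAST i. u i \<noteq> w i)" using h by blast
      moreover have "u (LEAST i. u i \<noteq> w i) \<noteq> w (LEAST i. u i \<noteq> w i)" using LeastI[of "\<lambda>i. u i \<noteq> w i" l] l by blast
      ultimately show False by simp
    qed
  next
    assume hi: "i \<le> (LEAST i. u i \<noteq> w i)"
    show "\<forall>l<i. u l = w l"
    proof (intro allI impI)
      fix l assume "l < i"
      then have "l < (LEAST i. u i \<noteq> w i)" using hi by simp
      then show "u l = w l" using not_less_Least[of l "\<lambda>i. u i \<noteq> w i"] by blast
    qed
  qed
  finally show "zp_res p w N mod p ^ i = zp_res p u N mod p ^ i \<longleftrightarrow> i \<le> (LEAST i. u i \<noteq> w i)" .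
qed

definition wt :: "real \<Rightarrow> nat \<Rightarrow> real" where "wt P i = P ^ (2 * i) * (1 - 1 / P\<^sup>2)"

lemma Au_eq: assumes "u \<in> Zp p" "w \<in> Zp p" "zp_res p w N \<noteq> zp_res p u N" "p > 0"
  shows "1 + (\<Sum>i\<in>{1..<N}. if zp_res p w N mod p ^ i = zp_res p u N mod p ^ i then wt (real p) i else 0)
       = real p ^ (2 * (LEAST i. u i \<noteq> w i))"
proof -
  define L where "L = (LEAST i. u i \<noteq> w i)"
  have LN: "L < N" using least_diff(1)[OF assms(1-3)] by (simp add: L_def)
  have "(\<Sum>i\<in>{1..<N}. if zp_res p w N mod p ^ i = zp_res p u N mod p ^ i then wt (real p) i else 0)
      = (\<Sum>i\<in>{1..<N}. if i \<in> {1..L} then wt (real p) i else 0)"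
    using least_diff(2)[OF assms(1-3)] by (intro sum.cong refl) (auto simp: L_def)
  also have "\<dots> = (\<Sum>i\<in>{1..L}. wt (real p) i)" using LN by (intro sum_if_sub) auto
  finally show ?thesis using telescope[of "real p" L] assms(4) by (simp add: wt_def L_def)
qed

lemma kernel_off: assumes "k \<noteq> j" "j < m" "k < m" "p > 1"
  shows "kernelH p m (k, w) (j, u) = Hper (real p) m ((k + m - j) mod m)"
proof -
  have "kernelH p m (k, w) (j, u) = (1 / real p ^ j) * (1 / real p ^ k) / (1 / real p ^ min j k)\<^sup>2
     + 1 / (real p ^ m - 1) * ((1 / real p ^ j) / (1 / real p ^ k) + (1 / real p ^ k) / (1 / real p ^ j))"
    unfolding kernelH_def E_abs_def E_abs_diff_def using assms(1) by simp
  also have "\<dots> = Hper (real p) m ((k + m - j) mod m)" using Hv_eq[of "real p" j m k] assms by simp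
  finally show ?thesis .
qed

lemma kernel_diag: assumes "w \<noteq> u" "p > 1"
  shows "kernelH p m (j, w) (j, u) = real p ^ (2 * (LEAST i. u i \<noteq> w i)) + 2 / (real p ^ m - 1)"
proof -
  define L where "L = (LEAST i. u i \<noteq> w i)"
  have "u \<noteq> w" using assms(1) by auto
  then have ad: "zp_abs_diff p u w = 1 / real p ^ L" by (simp add: zp_abs_diff_def L_def)
  define P where "P = real p"
  have P0: "P \<noteq> 0" using assms(2) by (simp add: P_def)
  have "kernelH p m (j, w) (j, u) = (1 / P ^ j) * (1 / P ^ j) / ((1 / P ^ j) * (1 / P ^ L))\<^sup>2
     + 1 / (P ^ m - 1) * ((1 / P ^ j) / (1 / P ^ j) + (1 / P ^ j) / (1 / P ^ j))"
    unfolding kernelH_def E_abs_def E_abs_diff_def using ad by (simp add: P_def)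
  also have "(1 / P ^ j) * (1 / P ^ j) / ((1 / P ^ j) * (1 / P ^ L))\<^sup>2 = P ^ (2 * L)"
    using P0 by (simp add: field_simps power2_eq_square power_mult mult.commute[of 2 L])
  also have "(1 / P ^ j) / (1 / P ^ j) = 1" using P0 by simp
  finally show ?thesis by (simp add: P_def L_def)
qed


definition integ :: "nat \<Rightarrow> nat \<Rightarrow> ((nat \<Rightarrow> nat) \<Rightarrow> complex) \<Rightarrow> complex \<Rightarrow> nat \<Rightarrow> (nat \<Rightarrow> nat) \<Rightarrow> nat \<Rightarrow> (nat \<Rightarrow> nat) \<Rightarrow> complex" where
  "integ p m chi \<omega> j u k = (\<lambda>w. indicator (Zp_units p) w *
      (complex_of_real (kernelH p m (k, w) (j, u)) * ((\<lambda>(k, u). \<omega> ^ k * chi u) (k, w) - (\<lambda>(k, u). \<omega> ^ k * chi u) (j, u))))"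

lemma Dop_expand: "Dop p m (\<lambda>(k, u). \<omega> ^ k * chi u) (j, u) =
    - complex_of_real (c_p p) * (\<Sum>k<m. integral\<^sup>L (zp_haar p) (integ p m chi \<omega> j u k))"
  unfolding Dop_def integ_def by simp

definition A1 :: "nat \<Rightarrow> nat \<Rightarrow> nat \<Rightarrow> real" where
  "A1 p N s = 1 + (\<Sum>i\<in>{1..<N}. if s mod p ^ i = 1 then wt (real p) i else 0)"

context
  fixes p N m :: nat and chi :: "(nat \<Rightarrow> nat) \<Rightarrow> complex" and \<omega> :: complex and j :: nat and u :: "nat \<Rightarrow> nat"
  assumes pr: "prime p" and N1: "1 \<le> N" and chr: "zp_character p chi"
    and LC: "\<forall>u\<in>Zp_units p. \<forall>w\<in>Zp_units p. zp_res p u N = zp_res p w N \<longrightarrow> chi u = chi w"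
    and jm: "j < m" and uU: "u \<in> Zp_units p"
begin

lemma p0': "p > 0" using prime_gt0[OF pr] .
lemma p1': "p > 1" using prime_ge2[OF pr] by simp

lemma int_off: assumes km: "k < m" "k \<noteq> j"
  shows "integral\<^sup>L (zp_haar p) (integ p m chi \<omega> j u k) =
    of_real (Hper (real p) m ((k + m - j) mod m)) *
      (\<omega> ^ k * (\<Sum>r\<in>Uu p N. chid p chi r) - \<omega> ^ j * chi u * of_nat (card (Uu p N))) / of_nat (p ^ N)"
proof -
  define H where "H = Hper (real p) m ((k + m - j) mod m)"
  have "integral\<^sup>L (zp_haar p) (integ p m chi \<omega> j u k) =
     (\<Sum>r<p ^ N. if r \<in> Uu p N then of_real H * (\<omega> ^ k * chid p chi r - \<omega> ^ j * chi u) else 0) / of_nat (p ^ N)"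
  proof (rule avg_integral_cong[OF p0'])
    fix w assume wZ: "w \<in> Zp p"
    show "integ p m chi \<omega> j u k w = (if zp_res p w N \<in> Uu p N then of_real H * (\<omega> ^ k * chid p chi (zp_res p w N) - \<omega> ^ j * chi u) else 0)"
    proof (cases "w \<in> Zp_units p")
      case True
      have K: "kernelH p m (k, w) (j, u) = H" using kernel_off[OF km(2) jm km(1) p1'] by (simp add: H_def)
      show ?thesis using True K res_Uu[OF pr N1 chr LC True] chi_res[OF pr N1 chr LC True]
        by (simp add: integ_def)
    next
      case False
      then show ?thesis using unit_iff[OF pr N1 chr LC wZ] by (simp add: integ_def)
    qed
  qed
  also have "\<dots> = (\<Sum>r\<in>Uu p N. of_real H * (\<omega> ^ k * chid p chi r - \<omega> ^ j * chi u)) / of_nat (p ^ N)"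
    by (simp add: sum_if_sub[OF finite_lessThan Uu_sub])
  also have "\<dots> = of_real H * (\<omega> ^ k * (\<Sum>r\<in>Uu p N. chid p chi r) - \<omega> ^ j * chi u * of_nat (card (Uu p N))) / of_nat (p ^ N)"
    by (simp add: sum_subtractf sum_distrib_left algebra_simps)
  finally show ?thesis by (simp add: H_def)
qed

lemma int_diag:
  shows "integral\<^sup>L (zp_haar p) (integ p m chi \<omega> j u j) =
    \<omega> ^ j * chi u * (\<Sum>s\<in>Uu p N. of_real (A1 p N s + 2 / (real p ^ m - 1)) * (chid p chi s - 1)) / of_nat (p ^ N)"
proof -
  define uN where "uN = zp_res p u N"
  define c where "c = 2 / (real p ^ m - 1)"
  have uNU: "uN \<in> Uu p N" using res_Uu[OF pr N1 chr LC uU] by (simp add: uN_def)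
  have chiu: "chi u = chid p chi uN" using chi_res[OF pr N1 chr LC uU] by (simp add: uN_def)
  define Au where "Au r = 1 + (\<Sum>i\<in>{1..<N}. if r mod p ^ i = uN mod p ^ i then wt (real p) i else 0)" for r
  define G where "G r = of_real (Au r + c) * (\<omega> ^ j * chid p chi r - \<omega> ^ j * chi u)" for r
  have "integral\<^sup>L (zp_haar p) (integ p m chi \<omega> j u j) =
     (\<Sum>r<p ^ N. if r \<in> Uu p N then G r else 0) / of_nat (p ^ N)"
  proof (rule avg_integral_cong[OF p0'])
    fix w assume wZ: "w \<in> Zp p"
    show "integ p m chi \<omega> j u j w = (if zp_res p w N \<in> Uu p N then G (zp_res p w N) else 0)"
    proof (cases "w \<in> Zp_units p")
      case True
      note rU = res_Uu[OF pr N1 chr LC True] and cw = chi_res[OF pr N1 chr LC True]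
      show ?thesis
      proof (cases "zp_res p w N = uN")
        case True2: True
        have cwu: "chi w = chi u" using LC True uU True2 unfolding uN_def by blast
        have "integ p m chi \<omega> j u j w = 0" by (simp add: integ_def cwu)
        moreover have "G uN = 0" by (simp add: G_def chiu)
        ultimately show ?thesis using rU True2 by simp
      next
        case False2: False
        then have wu: "w \<noteq> u" by (auto simp: uN_def)
        have K: "kernelH p m (j, w) (j, u) = real p ^ (2 * (LEAST i. u i \<noteq> w i)) + c"
          using kernel_diag[OF wu p1'] by (simp add: c_def)
        have A: "Au (zp_res p w N) = real p ^ (2 * (LEAST i. u i \<noteq> w i))"
          using Au_eq[OF units_Zp[OF uU] wZ _ p0'] False2 by (simp add: Au_def uN_def)
        have "integ p m chi \<omega> j u j w = of_real (kernelH p m (j, w) (j, u)) * (\<omega> ^ j * chi w - \<omega> ^ j * chi u)"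
          using True by (simp add: integ_def)
        also have "\<dots> = G (zp_res p w N)" unfolding G_def by (simp only: K A[symmetric] cw)
        finally show ?thesis using rU by simp
      qed
    next
      case False
      then show ?thesis using unit_iff[OF pr N1 chr LC wZ] by (simp add: integ_def)
    qed
  qed
  also have "(\<Sum>r<p ^ N. if r \<in> Uu p N then G r else 0) = (\<Sum>r\<in>Uu p N. G r)"
    by (rule sum_if_sub[OF finite_lessThan Uu_sub])
  also have "\<dots> = (\<Sum>s\<in>Uu p N. G (uN * s mod p ^ N))"
  proof -
    have "bij_betw (\<lambda>s. uN * s mod p ^ N) (Uu p N) (Uu p N)"
      by (rule bij_mult[OF Uu_finite subset_refl Uu_inj[OF pr uNU]]) (use Uu_mult[OF pr N1 uNU] in blast)
    from sum.reindex_bij_betw[OF this, of G] show ?thesis by simp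
  qed
  also have "\<dots> = (\<Sum>s\<in>Uu p N. \<omega> ^ j * chi u * (of_real (A1 p N s + c) * (chid p chi s - 1)))"
  proof (intro sum.cong refl)
    fix s assume sU: "s \<in> Uu p N"
    have "Au (uN * s mod p ^ N) = A1 p N s"
      unfolding Au_def A1_def
    proof (intro arg_cong[where f = "\<lambda>x. 1 + x"] sum.cong refl)
      fix i assume "i \<in> {1..<N}"
      then have i1: "1 \<le> i" and iN: "i \<le> N" by auto
      show "(if uN * s mod p ^ N mod p ^ i = uN mod p ^ i then wt (real p) i else 0) =
            (if s mod p ^ i = 1 then wt (real p) i else 0)"
        using coset_cond[OF pr i1 iN uNU, of s] by simp
    qed
    moreover have "chid p chi (uN * s mod p ^ N) = chid p chi uN * chid p chi s"
      using chid_mult[OF pr N1 chr LC uNU sU] .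
    ultimately show "G (uN * s mod p ^ N) = \<omega> ^ j * chi u * (of_real (A1 p N s + c) * (chid p chi s - 1))"
      unfolding G_def using chiu by (simp add: algebra_simps)
  qed
  also have "\<dots> = \<omega> ^ j * chi u * (\<Sum>s\<in>Uu p N. of_real (A1 p N s + c) * (chid p chi s - 1))"
    by (simp add: sum_distrib_left)
  finally show ?thesis by (simp add: c_def)
qed

end


lemma cp_eq: fixes P :: real assumes "P > 1"
  shows "P * (1 - 1 / P)\<^sup>2 / (1 - 1 / P\<^sup>2) = P * (P - 1) / (P + 1)"
proof -
  have P0: "P \<noteq> 0" and Pm: "P - 1 \<noteq> 0" and Pp: "P + 1 \<noteq> 0" using assms by auto
  define A where "A = (P - 1) / P"
  define B where "B = (P + 1) / P"
  have A0: "A \<noteq> 0" and B0: "B \<noteq> 0" using P0 Pm Pp by (auto simp: A_def B_def)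
  have a: "1 - 1 / P = A" using P0 by (simp add: A_def field_simps)
  have b: "1 - 1 / P\<^sup>2 = A * B" using P0 by (simp add: A_def B_def field_simps power2_eq_square)
  have "P * (1 - 1 / P)\<^sup>2 / (1 - 1 / P\<^sup>2) = P * A / B" unfolding a b using A0 B0
    by (simp add: power2_eq_square)
  also have "\<dots> = (P - 1) / ((P + 1) / P)" using P0 by (simp add: A_def B_def)
  also have "\<dots> = P * (P - 1) / (P + 1)" by (simp add: divide_divide_eq_right mult.commute)
  finally show ?thesis .
qed

lemma nontriv_alg: fixes P c :: real assumes "P > 1" "n \<ge> 1"
  shows "- (P * (1 - 1 / P)\<^sup>2 / (1 - 1 / P\<^sup>2)) *
          ((- (1 + c) * (1 - 1 / P) - (P + 1) * (P ^ n - P) / P\<^sup>2) - (1 - 1 / P) * (2 / (P - 1) - c))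
        = (P - 1) * P ^ (n - 1)"
proof -
  have P0: "P \<noteq> 0" and Pm: "P - 1 \<noteq> 0" and Pp: "P + 1 \<noteq> 0" using assms by auto
  define y where "y = P ^ (n - 1)"
  have Pn: "P ^ n = P * y" using assms(2) unfolding y_def by (metis Suc_diff_1 less_le_trans zero_less_one power_Suc)
  have inner: "(- (1 + c) * (1 - 1 / P) - (P + 1) * (P ^ n - P) / P\<^sup>2) - (1 - 1 / P) * (2 / (P - 1) - c)
      = - ((P + 1) * y / P)"
    unfolding Pn using P0 Pm by (simp add: field_simps power2_eq_square)
  have e: "- (P * (P - 1) / (P + 1)) * (- ((P + 1) * y / P)) = (P - 1) * y"
  proof -
    have pp: "P * P > 0" using assms(1) by simp
    have "P + P * P \<noteq> 0" using assms(1) pp by linarith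
    moreover have "P * (P + 1) \<noteq> 0" "(P + 1) * P \<noteq> 0" using P0 Pp by auto
    ultimately show ?thesis using P0 Pp by (simp add: field_simps)
  qed
  show ?thesis unfolding inner cp_eq[OF assms(1)] using e unfolding y_def .
qed

lemma pow_shift: fixes w :: complex assumes "w ^ m = 1" "j < m" "k < m"
  shows "w ^ k = w ^ j * w ^ ((k + m - j) mod m)"
proof (cases "j \<le> k")
  case True
  then show ?thesis using mod_shift[OF assms(2,3)] by (simp add: power_add[symmetric])
next
  case False
  then have "w ^ j * w ^ ((k + m - j) mod m) = w ^ (k + m)"
  proof -
    have "j + (k + m - j) = k + m" using False assms by simp
    then show ?thesis using mod_shift[OF assms(2,3)] False by (simp add: power_add[symmetric])
  qed
  also have "\<dots> = w ^ k" using assms(1) by (simp add: power_add)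
  finally show ?thesis by simp
qed


lemma ring_aux: "(- (x * y) - z) + (- y * w) = (- x * y - z) - y * w" for x y z w :: real
  by simp

context
  fixes p N m :: nat and chi :: "(nat \<Rightarrow> nat) \<Rightarrow> complex" and \<omega> :: complex and j :: nat and u :: "nat \<Rightarrow> nat"
  assumes pr: "prime p" and N1: "1 \<le> N" and chr: "zp_character p chi"
    and LC: "\<forall>u\<in>Zp_units p. \<forall>w\<in>Zp_units p. zp_res p u N = zp_res p w N \<longrightarrow> chi u = chi w"
    and jm: "j < m" and uU: "u \<in> Zp_units p" and wm: "\<omega> ^ m = 1"
begin

lemma q_p1: "real p > 1" using prime_ge2[OF pr] by simp

lemma q_cardU: "of_nat (card (Uu p N)) / of_nat (p ^ N) = (complex_of_real (1 - 1 / real p))"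
  using card_Uu[OF pr N1] by simp

lemma q_split: "(\<Sum>k<m. integral\<^sup>L (zp_haar p) (integ p m chi \<omega> j u k)) =
   integral\<^sup>L (zp_haar p) (integ p m chi \<omega> j u j) + (\<Sum>k\<in>{..<m} - {j}. integral\<^sup>L (zp_haar p) (integ p m chi \<omega> j u k))"
  using sum.remove[of "{..<m}" j] jm by simp

lemma q_S1: "(\<Sum>e\<in>{1..<m}. Hper (real p) m e) = 2 / (real p - 1) - 2 / (real p ^ m - 1)"
proof -
  have m1: "m \<ge> 1" using jm by simp
  have "(\<Sum>e\<in>{1..<m}. complex_of_real (Hper (real p) m e) * 1 ^ e)
     = 1 / (of_real (real p) * 1 - 1) + 1 / (of_real (real p) * cnj 1 - 1) - of_real (2 / (real p ^ m - 1))"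
    by (rule S2[OF q_p1 _ m1]) simp
  then have "complex_of_real (\<Sum>e\<in>{1..<m}. Hper (real p) m e) = of_real (2 / (real p - 1) - 2 / (real p ^ m - 1))"
    by (simp add: add_divide_distrib[symmetric])
  then show ?thesis by (simp only: of_real_eq_iff)
qed

lemma q_nontriv:
  assumes n1: "1 \<le> n" and nN: "n \<le> N"
    and sumU: "(\<Sum>s\<in>Uu p N. chid p chi s) = 0"
    and below: "\<And>i. 1 \<le> i \<Longrightarrow> i < n \<Longrightarrow> (\<Sum>s\<in>Ui p N i. chid p chi s) = 0"
    and above: "\<And>i s. n \<le> i \<Longrightarrow> i \<le> N \<Longrightarrow> s \<in> Ui p N i \<Longrightarrow> chid p chi s = 1"
  shows "(\<Sum>k<m. integral\<^sup>L (zp_haar p) (integ p m chi \<omega> j u k)) =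
     \<omega> ^ j * chi u * of_real ((- (1 + 2 / (real p ^ m - 1)) * (1 - 1 / real p) - (real p + 1) * (real p ^ n - real p) / (real p)\<^sup>2)
        - (1 - 1 / real p) * (2 / (real p - 1) - 2 / (real p ^ m - 1)))"
proof -
  define P where "P = real p"
  define c where "c = 2 / (P ^ m - 1)"
  define phx where "phx = \<omega> ^ j * chi u"
  have P1: "P > 1" using q_p1 by (simp add: P_def)
  have off: "integral\<^sup>L (zp_haar p) (integ p m chi \<omega> j u k) = phx * of_real (- Hper P m ((k + m - j) mod m) * (1 - 1 / P))"
    if "k \<in> {..<m} - {j}" for k
  proof -
    have "k < m" "k \<noteq> j" using that by auto
    from int_off[OF pr N1 chr LC jm uU this] sumU
    have "integral\<^sup>L (zp_haar p) (integ p m chi \<omega> j u k) =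
       - of_real (Hper (real p) m ((k + m - j) mod m)) * phx * (of_nat (card (Uu p N)) / of_nat (p ^ N))"
      by (simp add: phx_def)
    then show ?thesis unfolding q_cardU by (simp add: P_def)
  qed
  have offsum: "(\<Sum>k\<in>{..<m} - {j}. integral\<^sup>L (zp_haar p) (integ p m chi \<omega> j u k))
       = phx * of_real (- (1 - 1 / P) * (2 / (P - 1) - c))"
  proof -
    have "(\<Sum>k\<in>{..<m} - {j}. integral\<^sup>L (zp_haar p) (integ p m chi \<omega> j u k))
        = (\<Sum>k\<in>{..<m} - {j}. (\<lambda>e. phx * of_real (- Hper P m e * (1 - 1 / P))) ((k + m - j) mod m))"
      using off by simp
    also have "\<dots> = (\<Sum>e\<in>{1..<m}. phx * of_real (- Hper P m e * (1 - 1 / P)))"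
      by (rule sum_reindex_k[OF jm])
    also have "\<dots> = (\<Sum>e\<in>{1..<m}. (phx * of_real (- (1 - 1 / P))) * of_real (Hper P m e))"
      by (intro sum.cong refl) (simp add: algebra_simps)
    also have "\<dots> = (phx * of_real (- (1 - 1 / P))) * of_real (\<Sum>e\<in>{1..<m}. Hper P m e)"
      by (simp only: sum_distrib_left[symmetric] of_real_sum)
    also have "\<dots> = phx * of_real (- (1 - 1 / P) * (\<Sum>e\<in>{1..<m}. Hper P m e))"
      by simp
    also have "(\<Sum>e\<in>{1..<m}. Hper P m e) = 2 / (P - 1) - c" using q_S1 by (simp add: P_def c_def)
    finally show ?thesis .
  qed
  define T' where "T' = (\<Sum>s\<in>Uu p N. complex_of_real (A1 p N s + c) * (chid p chi s - 1))"
  have diag: "integral\<^sup>L (zp_haar p) (integ p m chi \<omega> j u j) = phx * T' / of_nat (p ^ N)"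
    using int_diag[OF pr N1 chr LC jm uU] by (simp add: T'_def phx_def c_def P_def)
  have T'eq: "T' = of_real (1 + c) * (\<Sum>s\<in>Uu p N. chid p chi s - 1)
      + (\<Sum>i\<in>{1..<N}. of_real (wt P i) * (\<Sum>s\<in>Ui p N i. chid p chi s - 1))"
  proof -
    have "T' = (\<Sum>s\<in>Uu p N. of_real (1 + c) * (chid p chi s - 1)
              + (\<Sum>i\<in>{1..<N}. if s mod p ^ i = 1 then of_real (wt P i) * (chid p chi s - 1) else 0))"
      unfolding T'_def A1_def
      by (intro sum.cong refl) (simp add: P_def algebra_simps sum_distrib_left sum_distrib_right if_distrib of_real_sum cong: if_cong)
    also have "\<dots> = of_real (1 + c) * (\<Sum>s\<in>Uu p N. chid p chi s - 1)
              + (\<Sum>i\<in>{1..<N}. \<Sum>s\<in>Uu p N. if s mod p ^ i = 1 then of_real (wt P i) * (chid p chi s - 1) else 0)"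
      by (simp add: sum.distrib sum_distrib_left) (rule sum.swap)
    also have "(\<Sum>i\<in>{1..<N}. \<Sum>s\<in>Uu p N. if s mod p ^ i = 1 then of_real (wt P i) * (chid p chi s - 1) else 0)
        = (\<Sum>i\<in>{1..<N}. of_real (wt P i) * (\<Sum>s\<in>Ui p N i. chid p chi s - 1))"
    proof (intro sum.cong refl)
      fix i
      have "(\<Sum>s\<in>Uu p N. if s mod p ^ i = 1 then of_real (wt P i) * (chid p chi s - 1) else 0)
          = (\<Sum>s\<in>Ui p N i. of_real (wt P i) * (chid p chi s - 1))"
        unfolding Ui_def by (rule sum.inter_filter[symmetric, OF Uu_finite])
      then show "(\<Sum>s\<in>Uu p N. if s mod p ^ i = 1 then of_real (wt P i) * (chid p chi s - 1) else 0)
          = of_real (wt P i) * (\<Sum>s\<in>Ui p N i. chid p chi s - 1)"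
        by (simp add: sum_distrib_left)
    qed
    finally show ?thesis .
  qed
  have sumU1: "(\<Sum>s\<in>Uu p N. chid p chi s - 1) / of_nat (p ^ N) = - of_real (1 - 1 / P)"
  proof -
    have "(\<Sum>s\<in>Uu p N. chid p chi s - 1) = - of_nat (card (Uu p N))"
      using sumU by (simp add: sum_subtractf)
    then show ?thesis using q_cardU by (simp add: P_def)
  qed
  have sumUi: "(\<Sum>s\<in>Ui p N i. chid p chi s - 1) / of_nat (p ^ N) = (if i < n then - of_real (1 / P ^ i) else 0)"
    if "i \<in> {1..<N}" for i
  proof (cases "i < n")
    case True
    have "(\<Sum>s\<in>Ui p N i. chid p chi s - 1) = - of_nat (card (Ui p N i))"
      using below[of i] True that by (simp add: sum_subtractf)
    then show ?thesis using card_Ui[OF pr, of i N] True that by (simp add: P_def)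
  next
    case False
    then have "(\<Sum>s\<in>Ui p N i. chid p chi s - 1) = 0" using above[of i] that by simp
    then show ?thesis using False by simp
  qed
  have "T' / of_nat (p ^ N) = of_real (1 + c) * ((\<Sum>s\<in>Uu p N. chid p chi s - 1) / of_nat (p ^ N))
      + (\<Sum>i\<in>{1..<N}. of_real (wt P i) * ((\<Sum>s\<in>Ui p N i. chid p chi s - 1) / of_nat (p ^ N)))"
    unfolding T'eq by (simp only: add_divide_distrib sum_divide_distrib[where A="{1..<N}"] times_divide_eq_right[symmetric])
  also have "\<dots> = - of_real ((1 + c) * (1 - 1 / P)) - (\<Sum>i\<in>{1..<N}. of_real (if i < n then wt P i / P ^ i else 0))"
  proof -
    have A: "of_real (1 + c) * ((\<Sum>s\<in>Uu p N. chid p chi s - 1) / of_nat (p ^ N)) = - complex_of_real ((1 + c) * (1 - 1 / P))"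
      unfolding sumU1 by (simp add: algebra_simps)
    have B: "(\<Sum>i\<in>{1..<N}. of_real (wt P i) * ((\<Sum>s\<in>Ui p N i. chid p chi s - 1) / of_nat (p ^ N)))
        = (\<Sum>i\<in>{1..<N}. - complex_of_real (if i < n then wt P i / P ^ i else 0))"
    proof (intro sum.cong refl)
      fix i assume i: "i \<in> {1..<N}"
      show "of_real (wt P i) * ((\<Sum>s\<in>Ui p N i. chid p chi s - 1) / of_nat (p ^ N)) = - complex_of_real (if i < n then wt P i / P ^ i else 0)"
        unfolding sumUi[OF i] by simp
    qed
    show ?thesis unfolding A B by (simp add: sum_negf)
  qed
  also have "(\<Sum>i\<in>{1..<N}. complex_of_real (if i < n then wt P i / P ^ i else 0)) = of_real (\<Sum>i\<in>{1..<n}. wt P i / P ^ i)"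
  proof -
    have "(\<Sum>i\<in>{1..<N}. (if i < n then wt P i / P ^ i else 0)) = (\<Sum>i\<in>{1..<N}. (if i \<in> {1..<n} then wt P i / P ^ i else 0))"
      by (intro sum.cong refl) auto
    also have "\<dots> = (\<Sum>i\<in>{1..<n}. wt P i / P ^ i)" using nN by (intro sum_if_sub) auto
    finally show ?thesis by (simp only: of_real_sum[symmetric])
  qed
  also have "(\<Sum>i\<in>{1..<n}. wt P i / P ^ i) = (P + 1) * (P ^ n - P) / P\<^sup>2"
    using Gsum[OF P1 n1] by (simp add: wt_def)
  finally have Tv: "T' / of_nat (p ^ N) = of_real (- ((1 + c) * (1 - 1 / P)) - (P + 1) * (P ^ n - P) / P\<^sup>2)"
    by (simp only: of_real_diff of_real_minus)
  define Tr where "Tr = - ((1 + c) * (1 - 1 / P)) - (P + 1) * (P ^ n - P) / P\<^sup>2"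
  define Off where "Off = - (1 - 1 / P) * (2 / (P - 1) - c)"
  have "(\<Sum>k<m. integral\<^sup>L (zp_haar p) (integ p m chi \<omega> j u k)) = phx * T' / of_nat (p ^ N) + phx * of_real Off"
    by (simp only: q_split diag offsum Off_def)
  also have "phx * T' / of_nat (p ^ N) = phx * of_real Tr" using Tv unfolding Tr_def by (metis times_divide_eq_right)
  also have "phx * of_real Tr + phx * of_real Off = phx * of_real (Tr + Off)" by (simp add: distrib_left)
  also have "Tr + Off = (- (1 + c) * (1 - 1 / P) - (P + 1) * (P ^ n - P) / P\<^sup>2) - (1 - 1 / P) * (2 / (P - 1) - c)"
    unfolding Tr_def Off_def by (rule ring_aux)
  finally show ?thesis unfolding phx_def P_def c_def .
qed

end


context
  fixes p N m :: nat and chi :: "(nat \<Rightarrow> nat) \<Rightarrow> complex" and \<omega> :: complex and j :: nat and u :: "nat \<Rightarrow> nat"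
  assumes pr: "prime p" and N1: "1 \<le> N" and chr: "zp_character p chi"
    and LC: "\<forall>u\<in>Zp_units p. \<forall>w\<in>Zp_units p. zp_res p u N = zp_res p w N \<longrightarrow> chi u = chi w"
    and jm: "j < m" and uU: "u \<in> Zp_units p" and wm: "\<omega> ^ m = 1"
begin

lemma q_triv: assumes triv: "\<forall>v\<in>Zp_units p. chi v = 1"
  shows "(\<Sum>k<m. integral\<^sup>L (zp_haar p) (integ p m chi \<omega> j u k)) =
     \<omega> ^ j * of_real (1 - 1 / real p) * ((\<Sum>e\<in>{1..<m}. of_real (Hper (real p) m e) * \<omega> ^ e)
        - (\<Sum>e\<in>{1..<m}. of_real (Hper (real p) m e) * 1 ^ e))"
proof -
  define P where "P = real p"
  have chid1: "chid p chi s = 1" if "s \<in> Uu p N" for s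
    using triv dig_unit[OF pr N1 chr LC that] by (simp add: chid_def)
  have chiu: "chi u = 1" using triv uU by blast
  have sumU: "(\<Sum>s\<in>Uu p N. chid p chi s) = of_nat (card (Uu p N))"
    using chid1 by simp
  have diag: "integral\<^sup>L (zp_haar p) (integ p m chi \<omega> j u j) = 0"
    using int_diag[OF pr N1 chr LC jm uU] chid1 by simp
  have off: "integral\<^sup>L (zp_haar p) (integ p m chi \<omega> j u k) =
      (\<lambda>e. \<omega> ^ j * of_real (1 - 1 / P) * (of_real (Hper P m e) * \<omega> ^ e - of_real (Hper P m e) * 1 ^ e)) ((k + m - j) mod m)"
    if "k \<in> {..<m} - {j}" for k
  proof -
    have km: "k < m" "k \<noteq> j" using that by auto
    have "integral\<^sup>L (zp_haar p) (integ p m chi \<omega> j u k) =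
      of_real (Hper P m ((k + m - j) mod m)) * (\<omega> ^ k - \<omega> ^ j) * (of_nat (card (Uu p N)) / of_nat (p ^ N))"
    proof -
      have q0: "complex_of_nat (p ^ N) \<noteq> 0" using prime_gt0[OF pr] by simp
      have "integral\<^sup>L (zp_haar p) (integ p m chi \<omega> j u k) =
         of_real (Hper (real p) m ((k + m - j) mod m)) * (\<omega> ^ k * of_nat (card (Uu p N)) - \<omega> ^ j * 1 * of_nat (card (Uu p N))) / of_nat (p ^ N)"
        by (simp only: int_off[OF pr N1 chr LC jm uU km] sumU chiu)
      also have "\<dots> = of_real (Hper P m ((k + m - j) mod m)) * (\<omega> ^ k - \<omega> ^ j) * (of_nat (card (Uu p N)) / of_nat (p ^ N))"
        using q0 by (simp add: P_def field_simps)
      finally show ?thesis .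
    qed
    also have "\<omega> ^ k = \<omega> ^ j * \<omega> ^ ((k + m - j) mod m)" by (rule pow_shift[OF wm jm km(1)])
    also have "of_nat (card (Uu p N)) / of_nat (p ^ N) = (complex_of_real (1 - 1 / P))"
      using q_cardU[OF pr N1 chr LC jm uU wm] by (simp add: P_def)
    finally show ?thesis by (simp add: algebra_simps)
  qed
  have "(\<Sum>k<m. integral\<^sup>L (zp_haar p) (integ p m chi \<omega> j u k)) =
      (\<Sum>k\<in>{..<m} - {j}. (\<lambda>e. \<omega> ^ j * of_real (1 - 1 / P) * (of_real (Hper P m e) * \<omega> ^ e - of_real (Hper P m e) * 1 ^ e)) ((k + m - j) mod m))"
    unfolding q_split[OF pr N1 chr LC jm uU wm] diag using off by simp
  also have "\<dots> = (\<Sum>e\<in>{1..<m}. \<omega> ^ j * of_real (1 - 1 / P) * (of_real (Hper P m e) * \<omega> ^ e - of_real (Hper P m e) * 1 ^ e))"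
    by (rule sum_reindex_k[OF jm])
  also have "\<dots> = \<omega> ^ j * of_real (1 - 1 / P) * ((\<Sum>e\<in>{1..<m}. of_real (Hper P m e) * \<omega> ^ e) - (\<Sum>e\<in>{1..<m}. of_real (Hper P m e) * 1 ^ e))"
    by (simp only: sum_distrib_left[symmetric] sum_subtractf)
  finally show ?thesis unfolding P_def .
qed

end


theorem mainTheorem2:
  fixes p m :: nat and \<omega> :: complex and chi :: "(nat \<Rightarrow> nat) \<Rightarrow> complex"
  assumes "prime p" and "m \<ge> 1" and "\<omega> ^ m = 1"
    and "zp_character p chi" and "zp_continuous p chi"
  shows "(\<not> zp_trivial p chi \<longrightarrow>
           (\<forall>x\<in>Eset p m. Dop p m (\<lambda>(k, u). \<omega> ^ k * chi u) x =
              (of_nat p - 1) * of_nat p ^ (conductor p chi - 1) * ((\<lambda>(k, u). \<omega> ^ k * chi u) x)))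
       \<and> (zp_trivial p chi \<longrightarrow>
           (\<forall>x\<in>Eset p m. Dop p m (\<lambda>(k, u). \<omega> ^ k * chi u) x =
              (of_nat p * (of_nat p - 1) * (2 - \<omega> - cnj \<omega>)
                / ((of_nat p)\<^sup>2 - of_nat p * (\<omega> + cnj \<omega>) + 1))
              * ((\<lambda>(k, u). \<omega> ^ k * chi u) x)))"
proof -
  note pr = assms(1) and m1 = assms(2) and wm = assms(3) and chr = assms(4)
  have p0: "p > 0" using prime_gt0[OF pr] .
  have p2: "p \<ge> 2" using prime_ge2[OF pr] .
  have P1: "real p > 1" using p2 by simp
  obtain N where N1: "1 \<le> N" and LCall: "\<forall>N'\<ge>N. \<forall>u\<in>Zp_units p. \<forall>w\<in>Zp_units p.
            zp_res p u N' = zp_res p w N' \<longrightarrow> chi u = chi w"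
    using chi_local_const[OF pr chr assms(5)] by blast
  have LC: "\<forall>u\<in>Zp_units p. \<forall>w\<in>Zp_units p. zp_res p u N = zp_res p w N \<longrightarrow> chi u = chi w"
    using LCall by blast
  show ?thesis
  proof (intro conjI impI ballI)
    fix x assume nt: "\<not> zp_trivial p chi" and xE: "x \<in> Eset p m"
    obtain j u where x: "x = (j, u)" and jm: "j < m" and uU: "u \<in> Zp_units p"
      using xE by (auto simp: Eset_def)
    define Pn where "Pn i \<longleftrightarrow> 1 \<le> i \<and> (\<forall>v\<in>Zp_units p. zp_res p v i = 1 \<longrightarrow> chi v = 1)" for i
    define n where "n = conductor p chi"
    have n_def': "n = (LEAST i. Pn i)" unfolding n_def conductor_def Pn_def ..
    have PnN: "Pn N"
      unfolding Pn_def
    proof (intro conjI ballI impI)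
      show "1 \<le> N" by (rule N1)
      fix v assume vU: "v \<in> Zp_units p" and r1: "zp_res p v N = 1"
      have pN: "p ^ N > 1" using p2 N1 by (intro one_less_power) auto
      have "zp_res p v N = zp_res p (one_zp p) N" using r1 pN p2 N1 by (simp add: one_zp_res)
      then have "chi v = chi (one_zp p)" using LC vU one_zp_unit[OF pr] by blast
      then show "chi v = 1" using chi_one[OF pr chr] by simp
    qed
    have Pn_n: "Pn n" using LeastI[of Pn N] PnN n_def' by simp
    have nN: "n \<le> N" using Least_le[of Pn N] PnN n_def' by simp
    have n1: "1 \<le> n" using Pn_n unfolding Pn_def by simp
    have sumU: "(\<Sum>s\<in>Uu p N. chid p chi s) = 0"
    proof -
      obtain v where vU: "v \<in> Zp_units p" and cv: "chi v \<noteq> 1" using nt unfolding zp_trivial_def by blast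
      have aU: "zp_res p v N \<in> Uu p N" using res_Uu[OF pr N1 chr LC vU] .
      have "chid p chi (zp_res p v N) \<noteq> 1" using chi_res[OF pr N1 chr LC vU] cv by simp
      then show ?thesis using sum_Uu_zero[OF pr N1 chr LC aU] by simp
    qed
    have below: "(\<Sum>s\<in>Ui p N i. chid p chi s) = 0" if i1: "1 \<le> i" and iN: "i < n" for i
    proof -
      have "\<not> Pn i" using not_less_Least[of i Pn] iN n_def' by simp
      then obtain v where vU: "v \<in> Zp_units p" and rv: "zp_res p v i = 1" and cv: "chi v \<noteq> 1"
        using i1 unfolding Pn_def by blast
      have iN': "i \<le> N" using iN nN by simp
      have aU: "zp_res p v N \<in> Ui p N i"
        using res_Uu[OF pr N1 chr LC vU] zp_res_mod[OF units_Zp[OF vU] iN'] rv by (simp add: Ui_def)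
      have "chid p chi (zp_res p v N) \<noteq> 1" using chi_res[OF pr N1 chr LC vU] cv by simp
      then show ?thesis using sum_Ui_zero[OF pr N1 chr LC i1 iN' aU] by simp
    qed
    have above: "chid p chi s = 1" if ni: "n \<le> i" and iN: "i \<le> N" and sU: "s \<in> Ui p N i" for i s
    proof -
      have sUu: "s \<in> Uu p N" and s1: "s mod p ^ i = 1" using sU by (auto simp: Ui_def)
      have dU: "dig p s \<in> Zp_units p" using dig_unit[OF pr N1 chr LC sUu] .
      have pn: "p ^ n > 1" using p2 n1 by (intro one_less_power) auto
      have "zp_res p (dig p s) n = s mod p ^ n" by (simp add: zp_res_dig)
      also have "\<dots> = s mod p ^ i mod p ^ n" using ni by (simp add: mod_pow_le)
      also have "\<dots> = 1" using s1 pn p2 n1 by simp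
      finally have "zp_res p (dig p s) n = 1" .
      then have "chi (dig p s) = 1" using Pn_n dU unfolding Pn_def by blast
      then show ?thesis by (simp add: chid_def)
    qed
    have S: "(\<Sum>k<m. integral\<^sup>L (zp_haar p) (integ p m chi \<omega> j u k)) =
       \<omega> ^ j * chi u * of_real ((- (1 + 2 / (real p ^ m - 1)) * (1 - 1 / real p) - (real p + 1) * (real p ^ n - real p) / (real p)\<^sup>2)
          - (1 - 1 / real p) * (2 / (real p - 1) - 2 / (real p ^ m - 1)))"
      by (rule q_nontriv[OF pr N1 chr LC jm uU wm n1 nN sumU below above])
    define R where "R = (- (1 + 2 / (real p ^ m - 1)) * (1 - 1 / real p) - (real p + 1) * (real p ^ n - real p) / (real p)\<^sup>2)
          - (1 - 1 / real p) * (2 / (real p - 1) - 2 / (real p ^ m - 1))"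
    have cR: "- c_p p * R = (real p - 1) * real p ^ (n - 1)"
      using nontriv_alg[OF P1 n1, of "2 / (real p ^ m - 1)"] unfolding c_p_def R_def by simp
    have "Dop p m (\<lambda>(k, u). \<omega> ^ k * chi u) x = - complex_of_real (c_p p) * (\<omega> ^ j * chi u * of_real R)"
      unfolding x Dop_expand S R_def ..
    also have "\<dots> = (\<omega> ^ j * chi u) * of_real (- c_p p * R)" by (simp add: algebra_simps)
    also have "\<dots> = (of_nat p - 1) * of_nat p ^ (conductor p chi - 1) * ((\<lambda>(k, u). \<omega> ^ k * chi u) x)"
      unfolding cR x n_def by (simp add: algebra_simps)
    finally show "Dop p m (\<lambda>(k, u). \<omega> ^ k * chi u) x = (of_nat p - 1) * of_nat p ^ (conductor p chi - 1) * ((\<lambda>(k, u). \<omega> ^ k * chi u) x)" .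
  next
    fix x assume tr: "zp_trivial p chi" and xE: "x \<in> Eset p m"
    obtain j u where x: "x = (j, u)" and jm: "j < m" and uU: "u \<in> Zp_units p"
      using xE by (auto simp: Eset_def)
    have triv: "\<forall>v\<in>Zp_units p. chi v = 1" using tr unfolding zp_trivial_def .
    have chiu: "chi u = 1" using triv uU by blast
    have wc: "\<omega> * cnj \<omega> = 1" using unit_root_cnj[OF wm m1] .
    define X where "X = complex_of_real (2 / (real p ^ m - 1))"
    have Sw: "(\<Sum>e\<in>{1..<m}. complex_of_real (Hper (real p) m e) * \<omega> ^ e) =
        1 / (of_real (real p) * \<omega> - 1) + 1 / (of_real (real p) * cnj \<omega> - 1) - X"
      unfolding X_def by (rule S2[OF P1 wm m1])
    have S1: "(\<Sum>e\<in>{1..<m}. complex_of_real (Hper (real p) m e) * 1 ^ e) =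
        1 / (of_real (real p) * 1 - 1) + 1 / (of_real (real p) * cnj 1 - 1) - X"
      unfolding X_def by (rule S2[OF P1 _ m1]) simp
    have "Dop p m (\<lambda>(k, u). \<omega> ^ k * chi u) x = - complex_of_real (c_p p) *
        (\<omega> ^ j * of_real (1 - 1 / real p) * ((1 / (of_real (real p) * \<omega> - 1) + 1 / (of_real (real p) * cnj \<omega> - 1) - X)
           - (1 / (of_real (real p) * 1 - 1) + 1 / (of_real (real p) * cnj 1 - 1) - X)))"
      unfolding x Dop_expand q_triv[OF pr N1 chr LC jm uU wm triv] Sw S1 ..
    also have "\<dots> = \<omega> ^ j * (- complex_of_real (real p * (1 - 1 / real p)\<^sup>2 / (1 - 1 / (real p)\<^sup>2)) *
        (of_real (1 - 1 / real p) * ((1 / (of_real (real p) * \<omega> - 1) + 1 / (of_real (real p) * cnj \<omega> - 1) - X)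
           - (1 / (of_real (real p) * 1 - 1) + 1 / (of_real (real p) * cnj 1 - 1) - X))))"
      unfolding c_p_def by (simp only: mult_ac mult_minus_left)
    also have "\<dots> = \<omega> ^ j * (of_real (real p) * (of_real (real p) - 1) * (2 - \<omega> - cnj \<omega>) / ((of_real (real p))\<^sup>2 - of_real (real p) * (\<omega> + cnj \<omega>) + 1))"
      unfolding triv_alg[OF P1 wc] ..
    also have "\<dots> = (of_nat p * (of_nat p - 1) * (2 - \<omega> - cnj \<omega>) / ((of_nat p)\<^sup>2 - of_nat p * (\<omega> + cnj \<omega>) + 1))
              * ((\<lambda>(k, u). \<omega> ^ k * chi u) x)"
      unfolding x using chiu by simp
    finally show "Dop p m (\<lambda>(k, u). \<omega> ^ k * chi u) x = (of_nat p * (of_nat p - 1) * (2 - \<omega> - cnj \<omega>)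
                / ((of_nat p)\<^sup>2 - of_nat p * (\<omega> + cnj \<omega>) + 1)) * ((\<lambda>(k, u). \<omega> ^ k * chi u) x)" .
  qed
qed


end
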